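(* Let $(X_n)$ be generated by the $\lambda$-SAGA algorithm (defined in the context) with a fixed $\lambda\in[0,1]$ and a positive deterministic step sequence $(\gamma_n)$ decreasing to $0$ with $\sum_{n\ge1}\gamma_n=+\infty$ and $\sum_{n\ge1}\gamma_n^2<+\infty$. Assume: (A1) $f$ is continuously differentiable and there is a unique $x^*\in\mathbb R^d$ with $\nabla f(x^* )=0$; (A2) for all $x\neq x^*$, $\langle x-x^*,\nabla f(x)\rangle>0$; (A3) there is $L>0$ such that for all $x\in\mathbb R^d$, $\frac1N\sum_{k=1}^N\|\nabla f_k(x)-\nabla f_k(x^* )\|^2\le L\|x-x^*\|^2$. Then $\lim_{n\to\infty}X_n=x^*$ almost surely and $\lim_{n\to\infty}f(X_n)=f(x^* )$ almost surely.
   Context: Let $N,d\ge1$ be integers, $f_1,\dots,f_N:\mathbb R^d\to\mathbb R$ differentiable, and $f=\frac1N\sum_{k=1}^N f_k$. The $\lambda$-SAGA algorithm with parameter $\lambda\in[0,1]$ and positive deterministic steps $(\gamma_n)_{n\ge1}$: let $X_0,X_1$ be square-integrable random vectors in $\mathbb R^d$ and $(U_n)_{n\ge2}$ i.i.d. uniform on $\{1,\dots,N\}$, independent of $(X_0,X_1)$. Set $g_{1,k}=\nabla f_k(X_0)$ for $k=1,\dots,N$ and for $n\ge1$: $X_{n+1}=X_n-\gamma_n\Big(\nabla f_{U_{n+1}}(X_n)-\lambda\big(g_{n,U_{n+1}}-\frac1N\sum_{k=1}^N g_{n,k}\big)\Big)$, and $g_{n+1,k}=\nabla f_k(X_n)$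 if $U_{n+1}=k$, $g_{n+1,k}=g_{n,k}$ otherwise. *)

theory Defs
  imports "HOL-Probability.Probability"
begin

definition avg_fun :: "nat \<Rightarrow> (nat \<Rightarrow> 'v \<Rightarrow> 'b::real_vector) \<Rightarrow> 'v \<Rightarrow> 'b" where
  "avg_fun N F x = (1 / real N) *\<^sub>R (\<Sum>k = 1..N. F k x)"

text \<open>lambda-SAGA state (X_n, g_n) for n >= 1, stored at index n-1.
  G k is the gradient of f_k, lam the parameter, gam the steps,
  x0 x1 the initial points, u the index sequence (u n = U_n, n >= 2).\<close>
primrec saga_state ::
  "nat \<Rightarrow> (nat \<Rightarrow> 'v \<Rightarrow> 'v::real_vector) \<Rightarrow> real \<Rightarrow> (nat \<Rightarrow> real) \<Rightarrow> 'v \<Rightarrow> 'v \<Rightarrow> (nat \<Rightarrow> nat)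
     \<Rightarrow> nat \<Rightarrow> 'v \<times> (nat \<Rightarrow> 'v)" where
  "saga_state N G lam gam x0 x1 u 0 = (x1, (\<lambda>k. G k x0))"
| "saga_state N G lam gam x0 x1 u (Suc m) =
     (let (x, g) = saga_state N G lam gam x0 x1 u m;
          n = Suc m;
          k = u (Suc n)
      in (x - gam n *\<^sub>R (G k x - lam *\<^sub>R (g k - avg_fun N (\<lambda>j _. g j) x)),
          g(k := G k x)))"

definition saga_X ::
  "nat \<Rightarrow> (nat \<Rightarrow> 'v \<Rightarrow> 'v::real_vector) \<Rightarrow> real \<Rightarrow> (nat \<Rightarrow> real) \<Rightarrow> 'v \<Rightarrow> 'v \<Rightarrow> (nat \<Rightarrow> nat)
     \<Rightarrow> nat \<Rightarrow> 'v" where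
  "saga_X N G lam gam x0 x1 u n =
     (if n = 0 then x0 else fst (saga_state N G lam gam x0 x1 u (n - 1)))"

end

theory Submission
  imports Defs
begin

locale saga_prob = prob_space M for M :: "'a measure" +
  fixes N :: nat and XX :: "'a \<Rightarrow> ('v::euclidean_space \<times> 'v)" and U :: "nat \<Rightarrow> 'a \<Rightarrow> nat"
  assumes N: "N \<ge> 1"
  and XX: "XX \<in> borel_measurable M"
  and U_meas: "\<And>n. n \<ge> 2 \<Longrightarrow> U n \<in> measurable M (count_space UNIV)"
  and U_unif: "\<And>n. n \<ge> 2 \<Longrightarrow> distr M (count_space UNIV) (U n) = measure_pmf (pmf_of_set {1..N})"
  and U_indep: "indep_vars (\<lambda>_. count_space UNIV) U {2..}"
  and XU_indep: "indep_set (sets (vimage_algebra (space M) XX borel))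
        (sets (vimage_algebra (space M) (\<lambda>\<omega>. restrict (\<lambda>n. U n \<omega>) {2::nat..}) (PiM {2..} (\<lambda>_. count_space UNIV))))"
begin

lemma prob_U_eq:
  assumes n: "n \<ge> 2" and k: "k \<in> {1..N}"
  shows "prob {\<omega>\<in>space M. U n \<omega> = k} = 1 / real N"
proof -
  have "prob {\<omega>\<in>space M. U n \<omega> = k} = measure (distr M (count_space UNIV) (U n)) {k}"
    using U_meas[OF n] by (subst measure_distr) (auto intro!: arg_cong[where f=prob])
  also have "\<dots> = measure (measure_pmf (pmf_of_set {1..N})) {k}" using U_unif[OF n] by simp
  also have "\<dots> = 1 / real N" using k N by (subst measure_pmf_of_set) auto
  finally show ?thesis .
qed

lemma AE_U_range: "AE \<omega> in M. \<forall>n\<ge>2. U n \<omega> \<in> {1..N}"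
proof -
  have "AE \<omega> in M. \<omega> \<in> {\<omega>\<in>space M. U n \<omega> \<in> {1..N}}" if n: "n \<ge> 2" for n
  proof (rule AE_prob_1)
    have "prob {\<omega>\<in>space M. U n \<omega> \<in> {1..N}} = measure (distr M (count_space UNIV) (U n)) {1..N}"
      using U_meas[OF n] by (subst measure_distr) (auto intro!: arg_cong[where f=prob])
    also have "\<dots> = measure (measure_pmf (pmf_of_set {1..N})) {1..N}" using U_unif[OF n] by simp
    also have "\<dots> = 1" using N by (subst measure_pmf_of_set) auto
    finally show "prob {\<omega>\<in>space M. U n \<omega> \<in> {1..N}} = 1" .
  qed
  then have "\<forall>n. AE \<omega> in M. n \<ge> 2 \<longrightarrow> U n \<omega> \<in> {1..N}" by (auto elim!: AE_mp)
  then show ?thesis by (subst AE_all_countable) auto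
qed

lemma prob_U_prod:
  assumes J: "finite J" "J \<subseteq> {2..}"
  shows "prob {\<omega>\<in>space M. \<forall>i\<in>J. U i \<omega> \<in> A i} = (\<Prod>i\<in>J. prob {\<omega>\<in>space M. U i \<omega> \<in> A i})"
proof (cases "J = {}")
  case True then show ?thesis by (simp add: prob_space)
next
  case False
  have "prob {\<omega>\<in>space M. \<forall>i\<in>J. U i \<omega> \<in> A i} = prob (\<Inter>i\<in>J. U i -` A i \<inter> space M)"
    using False by (intro arg_cong[where f=prob]) auto
  also have "\<dots> = (\<Prod>i\<in>J. prob (U i -` A i \<inter> space M))"
    using False J by (intro indep_varsD[OF U_indep]) auto
  also have "\<dots> = (\<Prod>i\<in>J. prob {\<omega>\<in>space M. U i \<omega> \<in> A i})"
    by (intro prod.cong refl arg_cong[where f=prob]) auto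
  finally show ?thesis .
qed

abbreviation "Useq \<equiv> (\<lambda>\<omega>. restrict (\<lambda>n. U n \<omega>) {2::nat..})"
abbreviation "SX \<equiv> sets (vimage_algebra (space M) XX borel)"
abbreviation "SU \<equiv> sets (vimage_algebra (space M) Useq (PiM {2..} (\<lambda>_. count_space UNIV)))"

lemma SU_events: "SU \<subseteq> events"
  using XU_indep by (rule indep_setD_ev2)

lemma XU_integral:
  fixes g :: "'v \<times> 'v \<Rightarrow> real"
  assumes g: "g \<in> borel_measurable borel" and gb: "\<And>z. \<bar>g z\<bar> \<le> B" and C: "C \<in> SU"
  shows "(\<integral>\<omega>. g (XX \<omega>) * indicator C \<omega> \<partial>M) = (\<integral>\<omega>. g (XX \<omega>) \<partial>M) * prob C"
proof -
  have Cev: "C \<in> events" using C SU_events by auto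
  have gX[measurable]: "(\<lambda>\<omega>. g (XX \<omega>)) \<in> borel_measurable M"
    using g XX by measurable
  have iC[measurable]: "indicator C \<in> borel_measurable M" using Cev by simp
  have sub1: "sigma_sets (space M) {(\<lambda>\<omega>. g (XX \<omega>)) -` A \<inter> space M | A. A \<in> sets borel} \<subseteq> SX"
  proof (rule sets.sigma_sets_subset')
    show "space M \<in> SX" by (rule sets_vimage_algebra_space)
    show "{(\<lambda>\<omega>. g (XX \<omega>)) -` A \<inter> space M | A. A \<in> sets borel} \<subseteq> SX"
    proof safe
      fix A :: "real set" assume A: "A \<in> sets borel"
      have "g -` A \<in> sets borel" using measurable_sets[OF g A] by simp
      moreover have "(\<lambda>\<omega>. g (XX \<omega>)) -` A \<inter> space M = XX -` (g -` A) \<inter> space M" by auto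
      ultimately show "(\<lambda>\<omega>. g (XX \<omega>)) -` A \<inter> space M \<in> SX"
        unfolding sets_vimage_algebra by (auto intro!: sigma_sets.Basic)
    qed
  qed
  have sub2: "sigma_sets (space M) {indicator C -` A \<inter> space M | A. A \<in> sets (borel :: real measure)} \<subseteq> SU"
  proof (rule sets.sigma_sets_subset')
    show "space M \<in> SU" by (rule sets_vimage_algebra_space)
    have CM: "C \<subseteq> space M" using Cev sets.sets_into_space by auto
    show "{indicator C -` A \<inter> space M | A. A \<in> sets (borel :: real measure)} \<subseteq> SU"
    proof safe
      fix A :: "real set"
      have eq: "indicator C -` A \<inter> space M = (if (1::real) \<in> A then C else {}) \<union> (if (0::real) \<in> A then space M - C else {})"
        using CM by (auto simp: indicator_def of_bool_def split: if_split_asm)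
      have "space M - C \<in> SU"
        by (rule sets.Diff[OF sets_vimage_algebra_space C])
      then show "indicator C -` A \<inter> space M \<in> SU"
        unfolding eq using C by (auto intro!: sets.Un sets_vimage_algebra_space)
    qed
  qed
  have "indep_set (sigma_sets (space M) {(\<lambda>\<omega>. g (XX \<omega>)) -` A \<inter> space M | A. A \<in> sets borel})
                  (sigma_sets (space M) {indicator C -` A \<inter> space M | A. A \<in> sets (borel :: real measure)})"
    unfolding indep_set_def
    by (rule indep_sets_mono_sets[OF XU_indep[unfolded indep_set_def]]) (use sub1 sub2 in \<open>auto split: bool.split\<close>)
  then have ind: "indep_var borel (\<lambda>\<omega>. g (XX \<omega>)) borel (indicator C :: 'a \<Rightarrow> real)"
    by (subst indep_var_eq) simp
  have int1: "integrable M (\<lambda>\<omega>. g (XX \<omega>))"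
    by (rule integrable_const_bound[where B=B]) (auto simp: gb)
  have int2: "integrable M (indicator C :: 'a \<Rightarrow> real)"
    by (rule integrable_const_bound[where B=1]) (auto simp: indicator_def)
  have "(\<integral>\<omega>. g (XX \<omega>) * indicator C \<omega> \<partial>M) = (\<integral>\<omega>. g (XX \<omega>) \<partial>M) * (\<integral>\<omega>. indicator C \<omega> \<partial>M)"
    by (rule indep_var_lebesgue_integral[OF ind int1 int2])
  also have "(\<integral>\<omega>. indicator C \<omega> \<partial>M) = prob C"
    using Cev by (simp add: emeasure_eq_measure)
  finally show ?thesis .
qed

lemma U_event_SU:
  assumes J: "J \<subseteq> {2..}"
  shows "{\<omega>\<in>space M. \<forall>i\<in>J. U i \<omega> = a i} \<in> SU"
proof -
  let ?P = "PiM {2::nat..} (\<lambda>_. count_space (UNIV::nat set))"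
  have Useq: "Useq \<in> space M \<rightarrow> space ?P" by (auto simp: space_PiM)
  have S: "{f\<in>space ?P. \<forall>i\<in>J. f i = a i} \<in> sets ?P"
  proof (rule predE, rule pred_intros_countable_bounded(3))
    fix i assume "i \<in> J"
    then have i: "i \<in> {2..}" using J by auto
    show "Measurable.pred ?P (\<lambda>x. x i = a i)"
      using i by measurable
  qed
  have "{\<omega>\<in>space M. \<forall>i\<in>J. U i \<omega> = a i} = Useq -` {f\<in>space ?P. \<forall>i\<in>J. f i = a i} \<inter> space M"
    using J Useq by auto
  also have "\<dots> \<in> SU" unfolding sets_vimage_algebra using S by (intro sigma_sets.Basic) blast
  finally show ?thesis .
qed

definition hist :: "nat \<Rightarrow> 'a \<Rightarrow> ('v \<times> 'v) \<times> nat list" where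
  "hist m \<omega> = (XX \<omega>, map (\<lambda>i. U (i+2) \<omega>) [0..<m])"

definition HS :: "(('v \<times> 'v) \<times> nat list) measure" where
  "HS = borel \<Otimes>\<^sub>M count_space UNIV"

definition ev :: "nat \<Rightarrow> nat list \<Rightarrow> 'a set" where
  "ev n a = {\<omega>\<in>space M. \<forall>i\<in>{2..<n+2}. U i \<omega> = a!(i-2)}"

lemma ulist_eq_iff:
  assumes "length a = n"
  shows "(map (\<lambda>i. U (i+2) \<omega>) [0..<n] = a) \<longleftrightarrow> (\<forall>i\<in>{2..<n+2}. U i \<omega> = a!(i-2))"
proof
  assume H: "map (\<lambda>i. U (i+2) \<omega>) [0..<n] = a"
  show "\<forall>i\<in>{2..<n+2}. U i \<omega> = a!(i-2)"
  proof
    fix i assume i: "i \<in> {2..<n+2}"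
    then obtain j where j: "i = j + 2" "j < n" by (metis atLeastLessThan_iff le_add_diff_inverse2 less_diff_conv2)
    show "U i \<omega> = a!(i-2)" using j H by auto
  qed
next
  assume H: "\<forall>i\<in>{2..<n+2}. U i \<omega> = a!(i-2)"
  show "map (\<lambda>i. U (i+2) \<omega>) [0..<n] = a"
  proof (rule nth_equalityI)
    show "length (map (\<lambda>i. U (i + 2) \<omega>) [0..<n]) = length a" using assms by simp
    fix j assume "j < length (map (\<lambda>i. U (i + 2) \<omega>) [0..<n])"
    then have j: "j < n" by simp
    then have "U (j+2) \<omega> = a!(j+2-2)" using H by auto
    then show "map (\<lambda>i. U (i + 2) \<omega>) [0..<n] ! j = a ! j" using j by simp
  qed
qed

lemma U_pred_sets: "J \<subseteq> {2..} \<Longrightarrow> {\<omega>\<in>space M. \<forall>i\<in>J. U i \<omega> = a i} \<in> sets M"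
  using U_event_SU SU_events by blast

lemma ulist_measurable[measurable]: "(\<lambda>\<omega>. map (\<lambda>i. U (i+2) \<omega>) [0..<m]) \<in> measurable M (count_space UNIV)"
proof (subst measurable_count_space_eq2_countable, safe)
  fix a :: "nat list"
  show "(\<lambda>\<omega>. map (\<lambda>i. U (i + 2) \<omega>) [0..<m]) -` {a} \<inter> space M \<in> sets M"
  proof (cases "length a = m")
    case True
    have "(\<lambda>\<omega>. map (\<lambda>i. U (i + 2) \<omega>) [0..<m]) -` {a} \<inter> space M = {\<omega>\<in>space M. \<forall>i\<in>{2..<m+2}. U i \<omega> = a!(i-2)}"
      using True ulist_eq_iff[OF True] by auto
    also have "\<dots> \<in> sets M" by (rule U_pred_sets) auto
    finally show ?thesis .
  next
    case False
    then have "(\<lambda>\<omega>. map (\<lambda>i. U (i + 2) \<omega>) [0..<m]) -` {a} \<inter> space M = {}" by auto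
    then show ?thesis by simp
  qed
qed simp

lemma hist_measurable[measurable]: "hist m \<in> measurable M HS"
  unfolding hist_def[abs_def] HS_def using XX by measurable

lemma ev_sets[measurable]: "ev n a \<in> sets M"
  unfolding ev_def by (rule U_pred_sets) auto

lemma prob_ev: "prob (ev n a) = (\<Prod>i\<in>{2..<n+2}. prob {\<omega>\<in>space M. U i \<omega> = a!(i-2)})"
proof -
  have "finite {2..<n+2}" "{2..<n+2} \<subseteq> {2::nat..}" by auto
  from prob_U_prod[OF this, of "\<lambda>i. {a!(i-2)}"] show ?thesis
    unfolding ev_def by (simp only: singleton_iff)
qed

lemma XU_integral_ev:
  fixes g :: "'v \<times> 'v \<Rightarrow> real"
  assumes g: "g \<in> borel_measurable borel" and gb: "\<And>z. \<bar>g z\<bar> \<le> B"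
  shows "(\<integral>\<omega>. g (XX \<omega>) * indicator (ev n a) \<omega> \<partial>M) = (\<integral>\<omega>. g (XX \<omega>) \<partial>M) * prob (ev n a)"
proof (rule XU_integral[OF g gb])
  show "ev n a \<in> SU" unfolding ev_def by (rule U_event_SU) auto
qed

lemma prob_ev_snoc:
  assumes "length l = m" "k \<in> {1..N}"
  shows "prob (ev (Suc m) (l @ [k])) = prob (ev m l) / real N"
proof -
  have "{2..<Suc m + 2} = insert (m+2) {2..<m+2}" by auto
  then have "prob (ev (Suc m) (l @ [k])) = prob {\<omega>\<in>space M. U (m+2) \<omega> = (l@[k])!(m+2-2)} *
        (\<Prod>i\<in>{2..<m+2}. prob {\<omega>\<in>space M. U i \<omega> = (l@[k])!(i-2)})"
    unfolding prob_ev by simp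
  also have "(\<Prod>i\<in>{2..<m+2}. prob {\<omega>\<in>space M. U i \<omega> = (l@[k])!(i-2)}) = prob (ev m l)"
    unfolding prob_ev using assms(1) by (intro prod.cong refl) (auto simp: nth_append)
  also have "prob {\<omega>\<in>space M. U (m+2) \<omega> = (l@[k])!(m+2-2)} = 1 / real N"
    using assms prob_U_eq[of "m+2" k] by (simp add: nth_append)
  finally show ?thesis by simp
qed

lemma hist_ev:
  assumes "\<omega> \<in> space M" "length l = m"
  shows "snd (hist m \<omega>) = l \<longleftrightarrow> \<omega> \<in> ev m l"
  using assms ulist_eq_iff[of l m \<omega>] by (simp add: hist_def ev_def)

definition ext :: "('v \<times> 'v) \<times> nat list \<Rightarrow> nat \<Rightarrow> ('v \<times> 'v) \<times> nat list" where
  "ext h k = (fst h, snd h @ [k])"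

lemma XXc_measurable[measurable]: "(\<lambda>\<omega>. (XX \<omega>, c)) \<in> measurable M HS"
  unfolding HS_def using XX by measurable

lemma ext_measurable[measurable]: "(\<lambda>h. ext h k) \<in> measurable HS HS"
  unfolding HS_def ext_def by measurable

lemma KEY:
  assumes phi[measurable]: "\<phi> \<in> borel_measurable HS" and pb: "\<And>h. \<bar>\<phi> h\<bar> \<le> B"
  shows "(\<integral>\<omega>. \<phi> (hist (Suc m) \<omega>) \<partial>M) = (\<integral>\<omega>. (\<Sum>k\<in>{1..N}. \<phi> (ext (hist m \<omega>) k)) / real N \<partial>M)"
proof -
  define L where "L = {l. set l \<subseteq> {1..N} \<and> length l = m}"
  have finL: "finite L" unfolding L_def by (rule finite_lists_length_eq) simp
  have gm: "(\<lambda>z. \<phi> (z, c)) \<in> borel_measurable borel" for c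
    using phi unfolding HS_def by measurable
  have gb: "\<bar>\<phi> (z, c)\<bar> \<le> B" for z c using pb .
  have B0: "0 \<le> B" using pb[of undefined] by linarith
  have int: "integrable M (\<lambda>\<omega>. \<phi> (XX \<omega>, c) * indicator A \<omega>)" if "A \<in> sets M" for c A
    using that gm[of c] XX pb B0 by (intro integrable_const_bound[where B=B]) (auto simp: indicator_def abs_mult)
  have int2: "integrable M (\<lambda>\<omega>. \<phi> (XX \<omega>, c) * indicator A \<omega> / real N)" if "A \<in> sets M" for c A
    using int[OF that] by simp
  have ae1: "AE \<omega> in M. \<phi> (hist (Suc m) \<omega>) = (\<Sum>l\<in>L. \<Sum>k\<in>{1..N}. \<phi> (XX \<omega>, l@[k]) * indicator (ev (Suc m) (l@[k])) \<omega>)"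
    using AE_U_range AE_space
  proof eventually_elim
    case (elim \<omega>)
    define l0 where "l0 = map (\<lambda>i. U (i+2) \<omega>) [0..<m]"
    define k0 where "k0 = U (m+2) \<omega>"
    have l0L: "l0 \<in> L" using elim unfolding L_def l0_def by auto
    have k0: "k0 \<in> {1..N}" using elim unfolding k0_def by auto
    have hS: "snd (hist (Suc m) \<omega>) = l0 @ [k0]" unfolding hist_def l0_def k0_def by simp
    have ind: "\<phi> (XX \<omega>, l@[k]) * indicator (ev (Suc m) (l@[k])) \<omega> = (if l = l0 then (if k = k0 then \<phi> (XX \<omega>, l@[k]) else 0) else 0)"
      if "l \<in> L" for l k
    proof -
      have "length (l@[k]) = Suc m" using that by (simp add: L_def)
      from hist_ev[OF elim(2) this] hS
      have "\<omega> \<in> ev (Suc m) (l@[k]) \<longleftrightarrow> l = l0 \<and> k = k0" by auto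
      then show ?thesis by (auto simp: indicator_def)
    qed
    have "(\<Sum>l\<in>L. \<Sum>k\<in>{1..N}. \<phi> (XX \<omega>, l@[k]) * indicator (ev (Suc m) (l@[k])) \<omega>)
        = (\<Sum>l\<in>L. if l = l0 then (\<Sum>k\<in>{1..N}. if k = k0 then \<phi> (XX \<omega>, l@[k]) else 0) else 0)"
      by (intro sum.cong refl) (simp add: ind)
    also have "\<dots> = \<phi> (XX \<omega>, l0@[k0])"
      using l0L k0 finL by (simp add: sum.delta)
    also have "\<dots> = \<phi> (hist (Suc m) \<omega>)" using hS by (simp add: hist_def)
    finally show ?case by simp
  qed
  have ae2: "AE \<omega> in M. (\<Sum>k\<in>{1..N}. \<phi> (ext (hist m \<omega>) k)) / real N = (\<Sum>l\<in>L. \<Sum>k\<in>{1..N}. \<phi> (XX \<omega>, l@[k]) * indicator (ev m l) \<omega> / real N)"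
    using AE_U_range AE_space
  proof eventually_elim
    case (elim \<omega>)
    define l0 where "l0 = map (\<lambda>i. U (i+2) \<omega>) [0..<m]"
    have l0L: "l0 \<in> L" using elim unfolding L_def l0_def by auto
    have hS: "snd (hist m \<omega>) = l0" unfolding hist_def l0_def by simp
    have ind: "\<phi> (XX \<omega>, l@[k]) * indicator (ev m l) \<omega> / real N = (if l = l0 then \<phi> (XX \<omega>, l@[k]) / real N else 0)"
      if "l \<in> L" for l k
    proof -
      have "length l = m" using that by (simp add: L_def)
      from hist_ev[OF elim(2) this] hS
      have "\<omega> \<in> ev m l \<longleftrightarrow> l = l0" by auto
      then show ?thesis by (auto simp: indicator_def)
    qed
    have "(\<Sum>l\<in>L. \<Sum>k\<in>{1..N}. \<phi> (XX \<omega>, l@[k]) * indicator (ev m l) \<omega> / real N)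
        = (\<Sum>l\<in>L. if l = l0 then (\<Sum>k\<in>{1..N}. \<phi> (XX \<omega>, l@[k]) / real N) else 0)"
      by (intro sum.cong refl) (simp add: ind)
    also have "\<dots> = (\<Sum>k\<in>{1..N}. \<phi> (XX \<omega>, l0@[k]) / real N)"
      using l0L finL by (simp add: sum.delta)
    also have "\<dots> = (\<Sum>k\<in>{1..N}. \<phi> (ext (hist m \<omega>) k)) / real N"
      using hS by (simp add: ext_def hist_def sum_divide_distrib)
    finally show ?case by simp
  qed
  have "(\<integral>\<omega>. \<phi> (hist (Suc m) \<omega>) \<partial>M) = (\<integral>\<omega>. (\<Sum>l\<in>L. \<Sum>k\<in>{1..N}. \<phi> (XX \<omega>, l@[k]) * indicator (ev (Suc m) (l@[k])) \<omega>) \<partial>M)"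
    apply (rule integral_cong_AE)
    apply measurable
    apply (rule ae1)
    done
  also have "\<dots> = (\<Sum>l\<in>L. \<Sum>k\<in>{1..N}. (\<integral>\<omega>. \<phi> (XX \<omega>, l@[k]) * indicator (ev (Suc m) (l@[k])) \<omega> \<partial>M))"
    apply (rule trans, rule Bochner_Integration.integral_sum)
     apply (rule Bochner_Integration.integrable_sum, rule int, rule ev_sets)
    apply (rule sum.cong[OF refl])
    apply (rule Bochner_Integration.integral_sum)
    apply (rule int, rule ev_sets)
    done
  also have "\<dots> = (\<Sum>l\<in>L. \<Sum>k\<in>{1..N}. (\<integral>\<omega>. \<phi> (XX \<omega>, l@[k]) * indicator (ev m l) \<omega> / real N \<partial>M))"
  proof (intro sum.cong refl)
    fix l k assume l: "l \<in> L" and k: "k \<in> {1..N}"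
    have "(\<integral>\<omega>. \<phi> (XX \<omega>, l@[k]) * indicator (ev (Suc m) (l@[k])) \<omega> \<partial>M) = (\<integral>\<omega>. \<phi> (XX \<omega>, l@[k]) \<partial>M) * prob (ev (Suc m) (l@[k]))"
      by (rule XU_integral_ev[OF gm gb])
    also have "\<dots> = (\<integral>\<omega>. \<phi> (XX \<omega>, l@[k]) \<partial>M) * prob (ev m l) / real N"
      using l k by (simp add: prob_ev_snoc L_def)
    also have "\<dots> = (\<integral>\<omega>. \<phi> (XX \<omega>, l@[k]) * indicator (ev m l) \<omega> \<partial>M) / real N"
      by (subst XU_integral_ev[OF gm gb]) simp
    also have "\<dots> = (\<integral>\<omega>. \<phi> (XX \<omega>, l@[k]) * indicator (ev m l) \<omega> / real N \<partial>M)"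
      by simp
    finally show "(\<integral>\<omega>. \<phi> (XX \<omega>, l@[k]) * indicator (ev (Suc m) (l@[k])) \<omega> \<partial>M) = (\<integral>\<omega>. \<phi> (XX \<omega>, l@[k]) * indicator (ev m l) \<omega> / real N \<partial>M)" .
  qed
  also have "\<dots> = (\<integral>\<omega>. (\<Sum>l\<in>L. \<Sum>k\<in>{1..N}. \<phi> (XX \<omega>, l@[k]) * indicator (ev m l) \<omega> / real N) \<partial>M)"
    apply (rule sym, rule trans, rule Bochner_Integration.integral_sum)
     apply (rule Bochner_Integration.integrable_sum, rule int2, rule ev_sets)
    apply (rule sum.cong[OF refl])
    apply (rule Bochner_Integration.integral_sum)
    apply (rule int2, rule ev_sets)
    done
  also have "\<dots> = (\<integral>\<omega>. (\<Sum>k\<in>{1..N}. \<phi> (ext (hist m \<omega>) k)) / real N \<partial>M)"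
    apply (rule integral_cong_AE)
    apply measurable
    using ae2 apply (auto elim!: AE_mp)
    done
  finally show ?thesis .
qed

end

lemma first_hit_sum:
  fixes P :: "nat \<Rightarrow> bool"
  shows "(\<Sum>j\<in>{m<..n}. (if P j \<and> (\<forall>i\<in>{m<..<j}. \<not> P i) then 1 else 0 :: real)) = (if \<exists>j\<in>{m<..n}. P j then 1 else 0)"
proof (induction n)
  case 0 then show ?case by simp
next
  case (Suc n)
  show ?case
  proof (cases "m < Suc n")
    case False then show ?thesis by simp
  next
    case True
    then have eq: "{m<..Suc n} = insert (Suc n) {m<..n}" by auto
    have "(\<exists>j\<in>{m<..Suc n}. P j) \<longleftrightarrow> (\<exists>j\<in>{m<..n}. P j) \<or> P (Suc n)" using eq by auto
    moreover have "(\<forall>i\<in>{m<..<Suc n}. \<not> P i) \<longleftrightarrow> \<not> (\<exists>j\<in>{m<..n}. P j)" by auto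
    ultimately show ?thesis unfolding eq using Suc by (simp add: sum.insert)
  qed
qed

context saga_prob begin

definition trunc :: "nat \<Rightarrow> ('v \<times> 'v) \<times> nat list \<Rightarrow> ('v \<times> 'v) \<times> nat list" where
  "trunc j h = (fst h, take j (snd h))"

lemma trunc_measurable[measurable]: "trunc j \<in> measurable HS HS"
  unfolding HS_def trunc_def[abs_def] by measurable

lemma trunc_hist: "j \<le> n \<Longrightarrow> trunc j (hist n \<omega>) = hist j \<omega>"
  by (simp add: trunc_def hist_def take_map)

lemma trunc_ext: "j \<le> length (snd h) \<Longrightarrow> trunc j (ext h k) = trunc j h"
  by (simp add: trunc_def ext_def)

lemma trunc_full: "length (snd h) = j \<Longrightarrow> trunc j h = h"
  by (simp add: trunc_def)

lemma len_hist[simp]: "length (snd (hist m \<omega>)) = m"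
  by (simp add: hist_def)

lemma int_bdd:
  fixes f :: "'a \<Rightarrow> real"
  assumes "f \<in> borel_measurable M" "\<And>\<omega>. \<omega> \<in> space M \<Longrightarrow> \<bar>f \<omega>\<bar> \<le> B"
  shows "integrable M f"
  using assms by (intro integrable_const_bound[where B=B]) auto

lemma int_hist:
  fixes \<phi> :: "_ \<Rightarrow> real"
  assumes "\<phi> \<in> borel_measurable HS" "\<And>h. \<bar>\<phi> h\<bar> \<le> B"
  shows "integrable M (\<lambda>\<omega>. \<phi> (hist m \<omega>))"
  using assms by (intro int_bdd[where B=B]) auto

lemma ORTH:
  fixes \<psi> \<delta> :: "_ \<Rightarrow> real"
  assumes psi[measurable]: "\<psi> \<in> borel_measurable HS" and pb: "\<And>h. \<bar>\<psi> h\<bar> \<le> B1"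
    and dl[measurable]: "\<delta> \<in> borel_measurable HS" and db: "\<And>h. \<bar>\<delta> h\<bar> \<le> B2"
    and jk: "j \<le> k"
    and mz: "\<And>x l. length l = k \<Longrightarrow> (\<Sum>i\<in>{1..N}. \<delta> (x, l@[i])) = 0"
  shows "(\<integral>\<omega>. \<psi> (hist j \<omega>) * \<delta> (hist (Suc k) \<omega>) \<partial>M) = 0"
proof -
  have B1: "0 \<le> B1" using pb[of undefined] by linarith
  have bnd: "\<bar>\<psi> (trunc j h) * \<delta> h\<bar> \<le> B1 * B2" for h
    unfolding abs_mult using pb db B1 by (intro mult_mono) auto
  have "(\<integral>\<omega>. \<psi> (hist j \<omega>) * \<delta> (hist (Suc k) \<omega>) \<partial>M) = (\<integral>\<omega>. (\<lambda>h. \<psi> (trunc j h) * \<delta> h) (hist (Suc k) \<omega>) \<partial>M)"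
    using jk by (simp add: trunc_hist)
  also have "\<dots> = (\<integral>\<omega>. (\<Sum>i\<in>{1..N}. (\<lambda>h. \<psi> (trunc j h) * \<delta> h) (ext (hist k \<omega>) i)) / real N \<partial>M)"
    by (rule KEY[OF _ bnd]) measurable
  also have "\<dots> = (\<integral>\<omega>. 0 \<partial>M)"
  proof (rule Bochner_Integration.integral_cong[OF refl])
    fix \<omega> assume "\<omega> \<in> space M"
    have t: "trunc j (ext (hist k \<omega>) i) = hist j \<omega>" for i
      using jk by (simp add: trunc_ext trunc_hist)
    have "(\<Sum>i\<in>{1..N}. \<psi> (trunc j (ext (hist k \<omega>) i)) * \<delta> (ext (hist k \<omega>) i))
        = \<psi> (hist j \<omega>) * (\<Sum>i\<in>{1..N}. \<delta> (fst (hist k \<omega>), snd (hist k \<omega>) @ [i]))"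
      unfolding t by (simp add: sum_distrib_left ext_def)
    also have "\<dots> = 0" using mz[of "snd (hist k \<omega>)"] by simp
    finally show "(\<Sum>i\<in>{1..N}. (\<lambda>h. \<psi> (trunc j h) * \<delta> h) (ext (hist k \<omega>) i)) / real N = 0" by simp
  qed
  finally show ?thesis by simp
qed

lemma sum_abs_bound:
  fixes f :: "nat \<Rightarrow> real"
  assumes "\<And>k. \<bar>f k\<bar> \<le> B"
  shows "\<bar>\<Sum>k\<in>{m..<j}. f k\<bar> \<le> real j * B"
proof -
  have B0: "0 \<le> B" using assms[of 0] by linarith
  have "\<bar>\<Sum>k\<in>{m..<j}. f k\<bar> \<le> (\<Sum>k\<in>{m..<j}. \<bar>f k\<bar>)" by (rule sum_abs)
  also have "\<dots> \<le> (\<Sum>k\<in>{m..<j}. B)" by (intro sum_mono assms)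
  also have "\<dots> = real (j - m) * B" by simp
  also have "\<dots> \<le> real j * B" using B0 by (intro mult_right_mono) auto
  finally show ?thesis .
qed

lemma kolmogorov_max:
  fixes \<delta> :: "nat \<Rightarrow> ('v \<times> 'v) \<times> nat list \<Rightarrow> real"
  assumes dm[measurable]: "\<And>k. \<delta> k \<in> borel_measurable HS" and db: "\<And>k h. \<bar>\<delta> k h\<bar> \<le> B"
    and mz: "\<And>k x l. length l = k \<Longrightarrow> (\<Sum>i\<in>{1..N}. \<delta> k (x, l@[i])) = 0"
    and mn: "m \<le> n" and e: "0 < \<epsilon>"
  shows "\<epsilon>\<^sup>2 * prob {\<omega>\<in>space M. \<exists>j\<in>{m<..n}. \<epsilon> \<le> \<bar>\<Sum>k\<in>{m..<j}. \<delta> k (hist (Suc k) \<omega>)\<bar>}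
          \<le> (\<Sum>k\<in>{m..<n}. \<integral>\<omega>. (\<delta> k (hist (Suc k) \<omega>))\<^sup>2 \<partial>M)"
proof -
  have B0: "0 \<le> B" using db[of 0 undefined] by linarith
  define D where "D k \<omega> = \<delta> k (hist (Suc k) \<omega>)" for k \<omega>
  define S where "S j \<omega> = (\<Sum>k\<in>{m..<j}. D k \<omega>)" for j \<omega>
  define s where "s j h = (\<Sum>k\<in>{m..<j}. \<delta> k (trunc (Suc k) h))" for j h
  have s_meas[measurable]: "s j \<in> borel_measurable HS" for j unfolding s_def by measurable
  have s_bnd: "\<bar>s j h\<bar> \<le> real j * B" for j h unfolding s_def by (rule sum_abs_bound) (rule db)
  have s_hist: "s j (hist n' \<omega>) = S j \<omega>" if "j \<le> n'" for j n' \<omega>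
    unfolding s_def S_def D_def using that by (intro sum.cong refl) (simp add: trunc_hist)
  have Dm[measurable]: "D k \<in> borel_measurable M" for k unfolding D_def by measurable
  have Sm[measurable]: "S j \<in> borel_measurable M" for j unfolding S_def by measurable
  have D_bnd: "\<bar>D k \<omega>\<bar> \<le> B" for k \<omega> unfolding D_def by (rule db)
  have S_bnd: "\<bar>S j \<omega>\<bar> \<le> real j * B" for j \<omega> unfolding S_def by (rule sum_abs_bound) (rule D_bnd)
  have orth: "(\<integral>\<omega>. \<psi> (hist j \<omega>) * D k \<omega> \<partial>M) = 0"
    if "\<psi> \<in> borel_measurable HS" "\<And>h. \<bar>\<psi> h\<bar> \<le> B1" "j \<le> k" for \<psi> B1 j k
    unfolding D_def by (rule ORTH[OF that(1,2) dm db that(3) mz])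
  have intD2: "integrable M (\<lambda>\<omega>. (D k \<omega>)\<^sup>2)" for k
    by (rule int_bdd[where B="B\<^sup>2"]) (auto simp: abs_square_le_1 power_mono D_bnd intro!: order.trans[OF _ power_mono[OF D_bnd]])
  have intS2: "integrable M (\<lambda>\<omega>. (S j \<omega>)\<^sup>2)" for j
    by (rule int_bdd[where B="(real j * B)\<^sup>2"]) (auto intro!: order.trans[OF _ power_mono[OF S_bnd]])
  have intSD: "integrable M (\<lambda>\<omega>. S j \<omega> * D k \<omega>)" for j k
    by (rule int_bdd[where B="real j * B * B"]) (auto simp: abs_mult B0 intro!: mult_mono S_bnd D_bnd B0)
  have sq: "(\<integral>\<omega>. (S n' \<omega>)\<^sup>2 \<partial>M) = (\<Sum>k\<in>{m..<n'}. \<integral>\<omega>. (D k \<omega>)\<^sup>2 \<partial>M)" if "m \<le> n'" for n'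
    using that
  proof (induction n' rule: dec_induct)
    case base then show ?case by (simp add: S_def)
  next
    case (step n')
    have SS: "S (Suc n') \<omega> = S n' \<omega> + D n' \<omega>" for \<omega> using step(1) by (simp add: S_def)
    have "(\<lambda>\<omega>. (S (Suc n') \<omega>)\<^sup>2) = (\<lambda>\<omega>. (S n' \<omega>)\<^sup>2 + 2 * (S n' \<omega> * D n' \<omega>) + (D n' \<omega>)\<^sup>2)"
      by (simp add: SS power2_eq_square algebra_simps)
    then have "(\<integral>\<omega>. (S (Suc n') \<omega>)\<^sup>2 \<partial>M) = (\<integral>\<omega>. (S n' \<omega>)\<^sup>2 \<partial>M) + 2 * (\<integral>\<omega>. S n' \<omega> * D n' \<omega> \<partial>M) + (\<integral>\<omega>. (D n' \<omega>)\<^sup>2 \<partial>M)"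
      using intS2 intSD intD2 by simp
    also have "(\<integral>\<omega>. S n' \<omega> * D n' \<omega> \<partial>M) = (\<integral>\<omega>. s n' (hist n' \<omega>) * D n' \<omega> \<partial>M)"
      by (simp add: s_hist)
    also have "\<dots> = 0" by (rule orth[OF s_meas s_bnd order.refl])
    finally show ?case using step(1,3) by simp
  qed
  define fH where "fH j h = (\<epsilon> \<le> \<bar>s j h\<bar> \<and> (\<forall>i\<in>{m<..<j}. \<bar>s i h\<bar> < \<epsilon>))" for j h
  have fH_meas[measurable]: "Measurable.pred HS (fH j)" for j unfolding fH_def by measurable
  define ind where "ind j \<omega> = (if fH j (hist j \<omega>) then 1 else (0::real))" for j \<omega>
  have indm[measurable]: "ind j \<in> borel_measurable M" for j unfolding ind_def by measurable
  have fH_hist: "fH j (hist j \<omega>) \<longleftrightarrow> (\<epsilon> \<le> \<bar>S j \<omega>\<bar> \<and> (\<forall>i\<in>{m<..<j}. \<bar>S i \<omega>\<bar> < \<epsilon>))" for j \<omega>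
    unfolding fH_def by (auto simp: s_hist)
  have int_ind: "integrable M (\<lambda>\<omega>. ind j \<omega> * c)" for j c
    by (rule int_bdd[where B="\<bar>c\<bar>"]) (auto simp: ind_def)
  have int_indS: "integrable M (\<lambda>\<omega>. ind j \<omega> * (S n' \<omega>)\<^sup>2)" for j n'
    by (rule int_bdd[where B="(real n' * B)\<^sup>2"]) (auto simp: ind_def intro!: order.trans[OF _ power_mono[OF S_bnd]])
  have hit: "\<epsilon>\<^sup>2 * (\<integral>\<omega>. ind j \<omega> \<partial>M) \<le> (\<integral>\<omega>. ind j \<omega> * (S n \<omega>)\<^sup>2 \<partial>M)" if j: "j \<in> {m<..n}" for j
  proof -
    define \<psi> where "\<psi> h = (if fH j h then s j h else 0)" for h
    have psim[measurable]: "\<psi> \<in> borel_measurable HS" unfolding \<psi>_def by measurable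
    have psib: "\<bar>\<psi> h\<bar> \<le> real j * B" for h unfolding \<psi>_def using s_bnd[of j h] B0 by auto
    have split: "S n \<omega> = S j \<omega> + (\<Sum>k\<in>{j..<n}. D k \<omega>)" for \<omega>
      unfolding S_def using j by (simp add: sum.atLeastLessThan_concat)
    have psih: "\<psi> (hist j \<omega>) = ind j \<omega> * S j \<omega>" for \<omega>
      unfolding \<psi>_def ind_def by (simp add: s_hist)
    have pw: "\<epsilon>\<^sup>2 * ind j \<omega> + 2 * (\<Sum>k\<in>{j..<n}. \<psi> (hist j \<omega>) * D k \<omega>) \<le> ind j \<omega> * (S n \<omega>)\<^sup>2" for \<omega>
    proof -
      let ?R = "\<Sum>k\<in>{j..<n}. D k \<omega>"
      have "(\<Sum>k\<in>{j..<n}. \<psi> (hist j \<omega>) * D k \<omega>) = ind j \<omega> * S j \<omega> * ?R"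
        by (simp add: psih sum_distrib_left)
      moreover have "\<epsilon>\<^sup>2 * ind j \<omega> \<le> ind j \<omega> * (S j \<omega>)\<^sup>2"
      proof (cases "fH j (hist j \<omega>)")
        case True
        then have "\<epsilon> \<le> \<bar>S j \<omega>\<bar>" using fH_hist by auto
        then have "\<epsilon>\<^sup>2 \<le> (S j \<omega>)\<^sup>2" using e by (metis abs_le_square_iff abs_of_pos)
        then show ?thesis using True by (simp add: ind_def)
      qed (simp add: ind_def)
      moreover have "0 \<le> ind j \<omega> * ?R\<^sup>2" by (simp add: ind_def)
      ultimately show ?thesis
        unfolding split by (simp add: power2_eq_square algebra_simps)
    qed
    have int_psiD: "integrable M (\<lambda>\<omega>. \<psi> (hist j \<omega>) * D k \<omega>)" for k
      by (rule int_bdd[where B="real j * B * B"]) (auto simp: abs_mult B0 intro!: mult_mono psib D_bnd B0)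
    have "(\<integral>\<omega>. \<epsilon>\<^sup>2 * ind j \<omega> + 2 * (\<Sum>k\<in>{j..<n}. \<psi> (hist j \<omega>) * D k \<omega>) \<partial>M)
          = \<epsilon>\<^sup>2 * (\<integral>\<omega>. ind j \<omega> \<partial>M) + 2 * (\<Sum>k\<in>{j..<n}. \<integral>\<omega>. \<psi> (hist j \<omega>) * D k \<omega> \<partial>M)"
      using int_ind[of j 1] int_psiD
      by (simp add: Bochner_Integration.integral_sum Bochner_Integration.integrable_sum)
    also have "(\<Sum>k\<in>{j..<n}. \<integral>\<omega>. \<psi> (hist j \<omega>) * D k \<omega> \<partial>M) = 0"
      by (intro sum.neutral ballI orth[OF psim psib]) auto
    finally have eq: "(\<integral>\<omega>. \<epsilon>\<^sup>2 * ind j \<omega> + 2 * (\<Sum>k\<in>{j..<n}. \<psi> (hist j \<omega>) * D k \<omega>) \<partial>M) = \<epsilon>\<^sup>2 * (\<integral>\<omega>. ind j \<omega> \<partial>M)" by simp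
    have "(\<integral>\<omega>. \<epsilon>\<^sup>2 * ind j \<omega> + 2 * (\<Sum>k\<in>{j..<n}. \<psi> (hist j \<omega>) * D k \<omega>) \<partial>M) \<le> (\<integral>\<omega>. ind j \<omega> * (S n \<omega>)\<^sup>2 \<partial>M)"
      using int_ind[of j 1] int_psiD int_indS
      by (intro Bochner_Integration.integral_mono pw) (auto intro!: Bochner_Integration.integrable_sum)
    then show ?thesis using eq by simp
  qed
  define E where "E = {\<omega>\<in>space M. \<exists>j\<in>{m<..n}. \<epsilon> \<le> \<bar>S j \<omega>\<bar>}"
  have Em[measurable]: "E \<in> sets M" unfolding E_def by measurable
  have sumind: "(\<Sum>j\<in>{m<..n}. ind j \<omega>) = indicator E \<omega>" if "\<omega> \<in> space M" for \<omega>
  proof -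
    have "(\<Sum>j\<in>{m<..n}. ind j \<omega>) = (\<Sum>j\<in>{m<..n}. (if \<epsilon> \<le> \<bar>S j \<omega>\<bar> \<and> (\<forall>i\<in>{m<..<j}. \<not> \<epsilon> \<le> \<bar>S i \<omega>\<bar>) then 1 else 0))"
      unfolding ind_def fH_hist by (intro sum.cong refl) (auto simp: not_le)
    also have "\<dots> = (if \<exists>j\<in>{m<..n}. \<epsilon> \<le> \<bar>S j \<omega>\<bar> then 1 else 0)" by (rule first_hit_sum)
    finally show ?thesis using that by (simp add: E_def indicator_def)
  qed
  have "\<epsilon>\<^sup>2 * prob E = \<epsilon>\<^sup>2 * (\<integral>\<omega>. (\<Sum>j\<in>{m<..n}. ind j \<omega>) \<partial>M)"
  proof -
    have "(\<integral>\<omega>. (\<Sum>j\<in>{m<..n}. ind j \<omega>) \<partial>M) = (\<integral>\<omega>. indicator E \<omega> \<partial>M)"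
      by (rule Bochner_Integration.integral_cong[OF refl]) (rule sumind)
    then show ?thesis using Em by simp
  qed
  also have "\<dots> = (\<Sum>j\<in>{m<..n}. \<epsilon>\<^sup>2 * (\<integral>\<omega>. ind j \<omega> \<partial>M))"
    using int_ind[of _ 1] by (simp add: Bochner_Integration.integral_sum sum_distrib_left)
  also have "\<dots> \<le> (\<Sum>j\<in>{m<..n}. \<integral>\<omega>. ind j \<omega> * (S n \<omega>)\<^sup>2 \<partial>M)"
    by (intro sum_mono hit)
  also have "\<dots> = (\<integral>\<omega>. (\<Sum>j\<in>{m<..n}. ind j \<omega>) * (S n \<omega>)\<^sup>2 \<partial>M)"
    using int_indS by (simp add: Bochner_Integration.integral_sum sum_distrib_right)
  also have "\<dots> \<le> (\<integral>\<omega>. (S n \<omega>)\<^sup>2 \<partial>M)"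
  proof (rule Bochner_Integration.integral_mono)
    show "integrable M (\<lambda>\<omega>. (\<Sum>j\<in>{m<..n}. ind j \<omega>) * (S n \<omega>)\<^sup>2)"
      using int_indS by (simp add: sum_distrib_right)
    show "integrable M (\<lambda>\<omega>. (S n \<omega>)\<^sup>2)" by (rule intS2)
    fix \<omega> assume "\<omega> \<in> space M"
    then show "(\<Sum>j\<in>{m<..n}. ind j \<omega>) * (S n \<omega>)\<^sup>2 \<le> (S n \<omega>)\<^sup>2"
      by (simp add: sumind indicator_def)
  qed
  also have "\<dots> = (\<Sum>k\<in>{m..<n}. \<integral>\<omega>. (D k \<omega>)\<^sup>2 \<partial>M)" by (rule sq[OF mn])
  finally show ?thesis unfolding E_def S_def D_def .
qed

end

context saga_prob begin

lemma kolmogorov_conv: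
  fixes \<delta> :: "nat \<Rightarrow> ('v \<times> 'v) \<times> nat list \<Rightarrow> real"
  assumes dm[measurable]: "\<And>k. \<delta> k \<in> borel_measurable HS" and db: "\<And>k h. \<bar>\<delta> k h\<bar> \<le> B"
    and mz: "\<And>k x l. length l = k \<Longrightarrow> (\<Sum>i\<in>{1..N}. \<delta> k (x, l@[i])) = 0"
    and summ: "summable (\<lambda>k. \<integral>\<omega>. (\<delta> k (hist (Suc k) \<omega>))\<^sup>2 \<partial>M)"
  shows "AE \<omega> in M. convergent (\<lambda>n. \<Sum>k<n. \<delta> k (hist (Suc k) \<omega>))"
proof -
  define D where "D k \<omega> = \<delta> k (hist (Suc k) \<omega>)" for k \<omega>
  define S where "S m j \<omega> = (\<Sum>k\<in>{m..<j}. D k \<omega>)" for m j \<omega>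
  define v where "v k = (\<integral>\<omega>. (D k \<omega>)\<^sup>2 \<partial>M)" for k
  have Dm[measurable]: "D k \<in> borel_measurable M" for k unfolding D_def by measurable
  have Sm[measurable]: "S m j \<in> borel_measurable M" for m j unfolding S_def by measurable
  have v0: "0 \<le> v k" for k unfolding v_def by (rule integral_nonneg_AE) auto
  have sv: "summable v" using summ unfolding v_def D_def .
  define Q where "Q m = (\<Sum>i. v (i + m))" for m
  have Q0: "(\<lambda>m. Q m) \<longlonglongrightarrow> 0" unfolding Q_def by (rule suminf_exist_split2[OF sv])
  have sumQ: "(\<Sum>k\<in>{m..<n}. v k) \<le> Q m" for m n
  proof -
    have svm: "summable (\<lambda>i. v (i + m))" using sv by (rule summable_ignore_initial_segment)
    have "(\<Sum>k\<in>{m..<n}. v k) = (\<Sum>i<n - m. v (i + m))"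
      by (rule sum.reindex_bij_witness[of _ "\<lambda>i. i + m" "\<lambda>k. k - m"]) auto
    also have "\<dots> \<le> Q m" unfolding Q_def by (rule sum_le_suminf[OF svm]) (auto simp: v0)
    finally show ?thesis .
  qed
  have maxi: "prob {\<omega>\<in>space M. \<exists>j\<in>{m<..}. \<epsilon> \<le> \<bar>S m j \<omega>\<bar>} \<le> Q m / \<epsilon>\<^sup>2" if e: "0 < \<epsilon>" for m \<epsilon>
  proof -
    define A where "A n = {\<omega>\<in>space M. \<exists>j\<in>{m<..n}. \<epsilon> \<le> \<bar>S m j \<omega>\<bar>}" for n
    have Am: "range A \<subseteq> sets M" unfolding A_def by auto
    have Ainc: "incseq A" unfolding A_def incseq_def by auto
    have Aun: "(\<Union>n. A n) = {\<omega>\<in>space M. \<exists>j\<in>{m<..}. \<epsilon> \<le> \<bar>S m j \<omega>\<bar>}" unfolding A_def by (auto; metis greaterThanAtMost_iff order_refl)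
    have bnd: "prob (A n) \<le> Q m / \<epsilon>\<^sup>2" for n
    proof (cases "m \<le> n")
      case True
      have "\<epsilon>\<^sup>2 * prob (A n) \<le> (\<Sum>k\<in>{m..<n}. v k)"
        unfolding A_def S_def D_def v_def by (rule kolmogorov_max[OF dm db mz True e])
      also have "\<dots> \<le> Q m" by (rule sumQ)
      finally show ?thesis using e by (simp add: field_simps)
    next
      case False
      then have "A n = {}" unfolding A_def by auto
      moreover have "0 \<le> Q m" using sumQ[of m m] by simp
      ultimately show ?thesis by simp
    qed
    have "(\<lambda>n. prob (A n)) \<longlonglongrightarrow> prob (\<Union>n. A n)" by (rule finite_Lim_measure_incseq[OF Am Ainc])
    then have "prob (\<Union>n. A n) \<le> Q m / \<epsilon>\<^sup>2" by (rule LIMSEQ_le_const2) (use bnd in auto)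
    then show ?thesis unfolding Aun .
  qed
  have ae_r: "AE \<omega> in M. \<exists>m. \<forall>j>m. \<bar>S m j \<omega>\<bar> < 1 / real (Suc r)" for r
  proof -
    define \<epsilon> where "\<epsilon> = 1 / real (Suc r)"
    have e: "0 < \<epsilon>" unfolding \<epsilon>_def by simp
    define Z where "Z = {\<omega>\<in>space M. \<forall>m. \<exists>j\<in>{m<..}. \<epsilon> \<le> \<bar>S m j \<omega>\<bar>}"
    have Zm[measurable]: "Z \<in> sets M" unfolding Z_def by measurable
    have "prob Z \<le> Q m / \<epsilon>\<^sup>2" for m
    proof -
      have "prob Z \<le> prob {\<omega>\<in>space M. \<exists>j\<in>{m<..}. \<epsilon> \<le> \<bar>S m j \<omega>\<bar>}"
        by (rule finite_measure_mono) (auto simp: Z_def)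
      also have "\<dots> \<le> Q m / \<epsilon>\<^sup>2" by (rule maxi[OF e])
      finally show ?thesis .
    qed
    moreover have "(\<lambda>m. Q m / \<epsilon>\<^sup>2) \<longlonglongrightarrow> 0" using tendsto_divide[OF Q0 tendsto_const, of "\<epsilon>\<^sup>2"] e by simp
    ultimately have "prob Z \<le> 0" by (intro LIMSEQ_le_const[of "\<lambda>m. Q m / \<epsilon>\<^sup>2"]) auto
    then have "prob Z = 0" using measure_nonneg[of M Z] by linarith
    then have "Z \<in> null_sets M" using Zm by (simp add: emeasure_eq_measure null_sets_def)
    from AE_not_in[OF this] AE_space show ?thesis
    proof eventually_elim
      case (elim \<omega>)
      then show ?case unfolding Z_def \<epsilon>_def by (auto simp: not_le)
    qed
  qed
  then have "AE \<omega> in M. \<forall>r. \<exists>m. \<forall>j>m. \<bar>S m j \<omega>\<bar> < 1 / real (Suc r)"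
    by (subst AE_all_countable) auto
  then show ?thesis
  proof eventually_elim
    case (elim \<omega>)
    let ?P = "\<lambda>n. \<Sum>k<n. \<delta> k (hist (Suc k) \<omega>)"
    have PS: "?P j = ?P m + S m j \<omega>" if "m \<le> j" for m j
    proof -
      have "?P j = (\<Sum>k\<in>{0..<j}. D k \<omega>)" by (simp add: D_def atLeast0LessThan)
      also have "\<dots> = (\<Sum>k\<in>{0..<m}. D k \<omega>) + S m j \<omega>"
        unfolding S_def using that by (simp add: sum.atLeastLessThan_concat)
      finally show ?thesis by (simp add: D_def atLeast0LessThan)
    qed
    have "Cauchy ?P"
    proof (rule CauchyI)
      fix e :: real assume "0 < e"
      then obtain r where r: "1 / real (Suc r) < e / 2"
        by (metis half_gt_zero_iff nat_approx_posE of_nat_Suc)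
      from elim obtain m where m: "\<And>j. j > m \<Longrightarrow> \<bar>S m j \<omega>\<bar> < 1 / real (Suc r)" by blast
      have m': "\<bar>S m j \<omega>\<bar> < e / 2" if "j \<ge> m" for j
      proof (cases "j = m")
        case True then show ?thesis using \<open>0 < e\<close> by (simp add: S_def)
      next
        case False then show ?thesis using m[of j] that r by simp
      qed
      show "\<exists>M. \<forall>p\<ge>M. \<forall>q\<ge>M. norm (?P p - ?P q) < e"
      proof (intro exI allI impI)
        fix p q assume "p \<ge> m" "q \<ge> m"
        then have "?P p - ?P q = S m p \<omega> - S m q \<omega>" using PS by simp
        then show "norm (?P p - ?P q) < e" using m'[OF \<open>p \<ge> m\<close>] m'[OF \<open>q \<ge> m\<close>] by simp
      qed
    qed
    then show ?case by (simp add: Cauchy_convergent_iff)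
  qed
qed

end

context saga_prob begin

lemma bsm_conv:
  fixes w :: "nat \<Rightarrow> ('v \<times> 'v) \<times> nat list \<Rightarrow> real"
  assumes wm[measurable]: "\<And>k. w k \<in> borel_measurable HS" and w0: "\<And>k h. 0 \<le> w k h" and wC: "\<And>k h. w k h \<le> C"
    and sup: "\<And>k x l. length l = k \<Longrightarrow> (\<Sum>i\<in>{1..N}. w (Suc k) (x, l@[i])) / real N \<le> w k (x, l)"
  shows "AE \<omega> in M. convergent (\<lambda>k. w k (hist k \<omega>))"
proof -
  have Npos: "0 < real N" using N by simp
  have C0: "0 \<le> C" using w0[of 0 undefined] wC[of 0 undefined] by linarith
  define q where "q k h = (\<Sum>i\<in>{1..N}. w (Suc k) (ext h i)) / real N" for k h
  have qm[measurable]: "q k \<in> borel_measurable HS" for k unfolding q_def by measurable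
  have q0: "0 \<le> q k h" for k h unfolding q_def by (intro divide_nonneg_pos sum_nonneg w0 Npos)
  have qC: "q k h \<le> C" for k h
  proof -
    have "(\<Sum>i\<in>{1..N}. w (Suc k) (ext h i)) \<le> (\<Sum>i\<in>{1..N}. C)" by (intro sum_mono wC)
    then show ?thesis unfolding q_def using Npos by (simp add: divide_le_eq mult.commute)
  qed
  define \<delta> where "\<delta> k h = w (Suc k) h - q k (trunc k h)" for k h
  have dm[measurable]: "\<delta> k \<in> borel_measurable HS" for k unfolding \<delta>_def by measurable
  have db: "\<bar>\<delta> k h\<bar> \<le> C" for k h unfolding \<delta>_def using w0[of "Suc k" h] wC[of "Suc k" h] q0[of k "trunc k h"] qC[of k "trunc k h"] by (simp add: abs_le_iff)
  have mz: "(\<Sum>i\<in>{1..N}. \<delta> k (x, l@[i])) = 0" if "length l = k" for k x l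
  proof -
    have t: "trunc k (x, l@[i]) = (x, l)" for i using that by (simp add: trunc_def)
    have "(\<Sum>i\<in>{1..N}. \<delta> k (x, l@[i])) = (\<Sum>i\<in>{1..N}. w (Suc k) (x, l@[i])) - real N * q k (x, l)"
      unfolding \<delta>_def t by (simp add: sum_subtractf)
    also have "\<dots> = 0" unfolding q_def using Npos by (simp add: ext_def)
    finally show ?thesis .
  qed
  have wabs: "\<bar>w k h\<bar> \<le> C" for k h by (metis abs_of_nonneg w0 wC)
  define W where "W k \<omega> = w k (hist k \<omega>)" for k \<omega>
  define Q where "Q k \<omega> = q k (hist k \<omega>)" for k \<omega>
  have Wm[measurable]: "W k \<in> borel_measurable M" for k unfolding W_def by measurable
  have Qm[measurable]: "Q k \<in> borel_measurable M" for k unfolding Q_def by measurable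
  have QW: "Q k \<omega> \<le> W k \<omega>" for k \<omega>
  proof -
    have "Q k \<omega> = (\<Sum>i\<in>{1..N}. w (Suc k) (fst (hist k \<omega>), snd (hist k \<omega>) @ [i])) / real N"
      unfolding Q_def q_def by (simp add: ext_def)
    also have "\<dots> \<le> w k (fst (hist k \<omega>), snd (hist k \<omega>))" by (rule sup) simp
    finally show ?thesis by (simp add: W_def)
  qed
  have D_eq: "\<delta> k (hist (Suc k) \<omega>) = W (Suc k) \<omega> - Q k \<omega>" for k \<omega>
    unfolding \<delta>_def W_def Q_def by (simp add: trunc_hist)
  have intW: "integrable M (\<lambda>\<omega>. W k \<omega>)" for k by (rule int_bdd[where B=C]) (auto simp: W_def wabs)
  have intQ: "integrable M (\<lambda>\<omega>. Q k \<omega>)" for k by (rule int_bdd[where B=C]) (auto simp: Q_def, metis abs_of_nonneg q0 qC)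
  have bnd2: "\<bar>a * b\<bar> \<le> C * C" if "0 \<le> a" "a \<le> C" "0 \<le> b" "b \<le> C" for a b
    using that by (simp add: abs_mult mult_mono)
  have intWW: "integrable M (\<lambda>\<omega>. (W k \<omega>)\<^sup>2)" for k
    by (rule int_bdd[where B="C*C"]) (auto simp: power2_eq_square W_def C0 intro!: bnd2 w0 wC mult_mono)
  have intQQ: "integrable M (\<lambda>\<omega>. (Q k \<omega>)\<^sup>2)" for k
    by (rule int_bdd[where B="C*C"]) (auto simp: power2_eq_square Q_def C0 intro!: bnd2 q0 qC mult_mono)
  have intWQ: "integrable M (\<lambda>\<omega>. W j \<omega> * Q k \<omega>)" for j k
    by (rule int_bdd[where B="C*C"]) (auto simp: W_def Q_def intro!: bnd2 w0 wC q0 qC)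
  have EW: "(\<integral>\<omega>. W (Suc k) \<omega> \<partial>M) = (\<integral>\<omega>. Q k \<omega> \<partial>M)" for k
  proof -
    have "(\<integral>\<omega>. W (Suc k) \<omega> \<partial>M) = (\<integral>\<omega>. (\<Sum>i\<in>{1..N}. w (Suc k) (ext (hist k \<omega>) i)) / real N \<partial>M)"
      unfolding W_def by (rule KEY[where B=C]) (auto intro: wabs)
    then show ?thesis by (simp add: Q_def q_def)
  qed
  have EWQ: "(\<integral>\<omega>. W (Suc k) \<omega> * Q k \<omega> \<partial>M) = (\<integral>\<omega>. (Q k \<omega>)\<^sup>2 \<partial>M)" for k
  proof -
    have "(\<integral>\<omega>. W (Suc k) \<omega> * Q k \<omega> \<partial>M) = (\<integral>\<omega>. (\<lambda>h. w (Suc k) h * q k (trunc k h)) (hist (Suc k) \<omega>) \<partial>M)"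
      unfolding W_def Q_def by (simp add: trunc_hist)
    also have "\<dots> = (\<integral>\<omega>. (\<Sum>i\<in>{1..N}. (\<lambda>h. w (Suc k) h * q k (trunc k h)) (ext (hist k \<omega>) i)) / real N \<partial>M)"
      by (rule KEY[where B="C*C"]) (auto intro!: bnd2 w0 wC q0 qC)
    also have "\<dots> = (\<integral>\<omega>. (Q k \<omega>)\<^sup>2 \<partial>M)"
    proof (rule Bochner_Integration.integral_cong[OF refl])
      fix \<omega>
      have t: "trunc k (ext (hist k \<omega>) i) = hist k \<omega>" for i by (simp add: trunc_ext trunc_full)
      show "(\<Sum>i\<in>{1..N}. (\<lambda>h. w (Suc k) h * q k (trunc k h)) (ext (hist k \<omega>) i)) / real N = (Q k \<omega>)\<^sup>2"
        unfolding t by (simp add: Q_def q_def power2_eq_square sum_distrib_right sum_divide_distrib)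
    qed
    finally show ?thesis .
  qed
  define g where "g k = (\<integral>\<omega>. (W k \<omega>)\<^sup>2 \<partial>M) - 2 * C * (\<integral>\<omega>. W k \<omega> \<partial>M)" for k
  have Dk: "(\<integral>\<omega>. (\<delta> k (hist (Suc k) \<omega>))\<^sup>2 \<partial>M) \<le> g (Suc k) - g k" for k
  proof -
    have "(\<integral>\<omega>. (\<delta> k (hist (Suc k) \<omega>))\<^sup>2 \<partial>M) = (\<integral>\<omega>. (W (Suc k) \<omega>)\<^sup>2 - 2 * (W (Suc k) \<omega> * Q k \<omega>) + (Q k \<omega>)\<^sup>2 \<partial>M)"
      unfolding D_eq by (simp add: power2_eq_square algebra_simps)
    also have "\<dots> = (\<integral>\<omega>. (W (Suc k) \<omega>)\<^sup>2 \<partial>M) - 2 * (\<integral>\<omega>. W (Suc k) \<omega> * Q k \<omega> \<partial>M) + (\<integral>\<omega>. (Q k \<omega>)\<^sup>2 \<partial>M)"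
      using intWW intWQ intQQ by simp
    also have "\<dots> = (\<integral>\<omega>. (W (Suc k) \<omega>)\<^sup>2 \<partial>M) - (\<integral>\<omega>. (Q k \<omega>)\<^sup>2 \<partial>M)" by (simp add: EWQ)
    finally have e1: "(\<integral>\<omega>. (\<delta> k (hist (Suc k) \<omega>))\<^sup>2 \<partial>M) = (\<integral>\<omega>. (W (Suc k) \<omega>)\<^sup>2 \<partial>M) - (\<integral>\<omega>. (Q k \<omega>)\<^sup>2 \<partial>M)" .
    have e2: "(\<integral>\<omega>. (Q k \<omega>)\<^sup>2 \<partial>M) \<ge> (\<integral>\<omega>. (W k \<omega>)\<^sup>2 - 2 * C * W k \<omega> + 2 * C * Q k \<omega> \<partial>M)"
    proof (rule Bochner_Integration.integral_mono)
      show "integrable M (\<lambda>\<omega>. (W k \<omega>)\<^sup>2 - 2 * C * W k \<omega> + 2 * C * Q k \<omega>)" using intWW intW intQ by auto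
      show "integrable M (\<lambda>\<omega>. (Q k \<omega>)\<^sup>2)" by (rule intQQ)
      fix \<omega>
      have a: "0 \<le> W k \<omega> - Q k \<omega>" using QW by simp
      have b: "W k \<omega> + Q k \<omega> \<le> 2 * C" using wC[of k "hist k \<omega>"] qC[of k "hist k \<omega>"] by (simp add: W_def Q_def)
      have "(W k \<omega>)\<^sup>2 - (Q k \<omega>)\<^sup>2 = (W k \<omega> - Q k \<omega>) * (W k \<omega> + Q k \<omega>)" by (simp add: power2_eq_square algebra_simps)
      also have "\<dots> \<le> (W k \<omega> - Q k \<omega>) * (2 * C)" by (rule mult_left_mono[OF b a])
      finally show "(W k \<omega>)\<^sup>2 - 2 * C * W k \<omega> + 2 * C * Q k \<omega> \<le> (Q k \<omega>)\<^sup>2" by (simp add: algebra_simps)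
    qed
    have e3: "(\<integral>\<omega>. (W k \<omega>)\<^sup>2 - 2 * C * W k \<omega> + 2 * C * Q k \<omega> \<partial>M) = (\<integral>\<omega>. (W k \<omega>)\<^sup>2 \<partial>M) - 2 * C * (\<integral>\<omega>. W k \<omega> \<partial>M) + 2 * C * (\<integral>\<omega>. W (Suc k) \<omega> \<partial>M)"
      using intWW intW intQ by (simp add: EW)
    show ?thesis unfolding g_def using e1 e2 e3 by linarith
  qed
  have gup: "g n \<le> C * C" for n
  proof -
    have "(\<integral>\<omega>. (W n \<omega>)\<^sup>2 \<partial>M) \<le> (\<integral>\<omega>. C * C \<partial>M)"
      using intWW by (intro Bochner_Integration.integral_mono) (auto simp: power2_eq_square W_def C0 intro!: mult_mono w0 wC)
    moreover have "0 \<le> (\<integral>\<omega>. W n \<omega> \<partial>M)" by (rule integral_nonneg_AE) (auto simp: W_def w0)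
    ultimately show ?thesis unfolding g_def using C0 prob_space by (simp add: mult_nonneg_nonneg) (smt (verit) mult_nonneg_nonneg)
  qed
  have glow: "- 2 * C * C \<le> g 0"
  proof -
    have "0 \<le> (\<integral>\<omega>. (W 0 \<omega>)\<^sup>2 \<partial>M)" by (rule integral_nonneg_AE) auto
    moreover have "(\<integral>\<omega>. W 0 \<omega> \<partial>M) \<le> (\<integral>\<omega>. C \<partial>M)"
      using intW by (intro Bochner_Integration.integral_mono) (auto simp: W_def wC)
    moreover have "(\<integral>\<omega>. C \<partial>M) = C" using prob_space by simp
    ultimately have "2 * C * (\<integral>\<omega>. W 0 \<omega> \<partial>M) \<le> 2 * C * C" "0 \<le> (\<integral>\<omega>. (W 0 \<omega>)\<^sup>2 \<partial>M)"
      using C0 by (auto intro!: mult_left_mono)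
    then show ?thesis unfolding g_def by linarith
  qed
  have summ: "summable (\<lambda>k. \<integral>\<omega>. (\<delta> k (hist (Suc k) \<omega>))\<^sup>2 \<partial>M)"
  proof (rule summableI_nonneg_bounded)
    fix n
    show "0 \<le> (\<integral>\<omega>. (\<delta> n (hist (Suc n) \<omega>))\<^sup>2 \<partial>M)" by (rule integral_nonneg_AE) auto
    have "(\<Sum>k<n. \<integral>\<omega>. (\<delta> k (hist (Suc k) \<omega>))\<^sup>2 \<partial>M) \<le> (\<Sum>k<n. g (Suc k) - g k)" by (intro sum_mono Dk)
    also have "\<dots> = g n - g 0" by (rule sum_lessThan_telescope)
    also have "\<dots> \<le> 3 * C * C" using gup[of n] glow by simp
    finally show "(\<Sum>k<n. \<integral>\<omega>. (\<delta> k (hist (Suc k) \<omega>))\<^sup>2 \<partial>M) \<le> 3 * C * C" .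
  qed
  have "AE \<omega> in M. convergent (\<lambda>n. \<Sum>k<n. \<delta> k (hist (Suc k) \<omega>))"
    by (rule kolmogorov_conv[OF dm db mz summ])
  then show ?thesis
  proof eventually_elim
    case (elim \<omega>)
    define P where "P n = (\<Sum>k<n. \<delta> k (hist (Suc k) \<omega>))" for n
    define A where "A n = (\<Sum>k<n. W k \<omega> - Q k \<omega>)" for n
    have PS: "P (Suc n) = P n + (W (Suc n) \<omega> - Q n \<omega>)" for n
      unfolding P_def by (simp add: D_eq)
    have AS: "A (Suc n) = A n + (W n \<omega> - Q n \<omega>)" for n
      unfolding A_def by simp
    have WPA: "W n \<omega> = W 0 \<omega> + P n - A n" for n
    proof (induction n)
      case 0 then show ?case by (simp add: P_def A_def)
    next
      case (Suc n) then show ?case using PS[of n] AS[of n] by linarith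
    qed
    have cP: "convergent P" using elim unfolding P_def .
    then obtain K where K: "\<And>n. \<bar>P n\<bar> \<le> K" using convergent_imp_Bseq[OF cP] by (auto simp: Bseq_def)
    have A_bnd: "\<bar>A n\<bar> \<le> C + K" for n
    proof -
      have "0 \<le> A n" unfolding A_def by (intro sum_nonneg) (use QW in \<open>simp add: diff_ge_0_iff_ge\<close>)
      moreover have "A n = W 0 \<omega> + P n - W n \<omega>" using WPA[of n] by linarith
      moreover have "0 \<le> W n \<omega>" "W 0 \<omega> \<le> C" by (simp_all add: W_def w0 wC)
      ultimately show ?thesis using K[of n] by (simp add: abs_le_iff)
    qed
    have "Bseq A" using A_bnd by (intro BseqI'[where K="C+K"]) (simp add: real_norm_def)
    moreover have "monoseq A"
    proof (rule mono_SucI1, intro allI)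
      fix n show "A n \<le> A (Suc n)" using AS[of n] QW[of n \<omega>] by linarith
    qed
    ultimately have cA: "convergent A" by (rule Bseq_monoseq_convergent)
    have "convergent (\<lambda>n. W 0 \<omega> + P n - A n)"
      using cP cA by (intro convergent_diff convergent_add convergent_const)
    moreover have "(\<lambda>k. w k (hist k \<omega>)) = (\<lambda>n. W 0 \<omega> + P n - A n)"
    proof
      fix n show "w n (hist n \<omega>) = W 0 \<omega> + P n - A n" using WPA[of n] unfolding W_def .
    qed
    ultimately show ?case by simp
  qed
qed

end

context saga_prob begin

lemma avg_bound:
  fixes f :: "nat \<Rightarrow> real"
  assumes "\<And>i. 0 \<le> f i" "\<And>i. f i \<le> c"
  shows "\<bar>(\<Sum>i\<in>{1..N}. f i) / real N\<bar> \<le> c"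
proof -
  have Npos: "0 < real N" using N by simp
  have "0 \<le> (\<Sum>i\<in>{1..N}. f i)" by (intro sum_nonneg assms)
  moreover have "(\<Sum>i\<in>{1..N}. f i) \<le> (\<Sum>i\<in>{1..N}. c)" by (intro sum_mono assms)
  ultimately show ?thesis using Npos by (simp add: divide_le_eq mult.commute)
qed

lemma usm_conv:
  fixes w :: "nat \<Rightarrow> ('v \<times> 'v) \<times> nat list \<Rightarrow> real"
  assumes wm[measurable]: "\<And>k. w k \<in> borel_measurable HS" and w0: "\<And>k h. 0 \<le> w k h"
    and sup: "\<And>k x l. length l = k \<Longrightarrow> (\<Sum>i\<in>{1..N}. w (Suc k) (x, l@[i])) / real N \<le> w k (x, l)"
    and int0: "integrable M (\<lambda>\<omega>. w 0 (hist 0 \<omega>))"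
  shows "AE \<omega> in M. convergent (\<lambda>k. w k (hist k \<omega>))"
proof -
  have Npos: "0 < real N" using N by simp
  define wc where "wc C k h = min (w k h) (real C)" for C :: nat and k h
  have wcm[measurable]: "wc C k \<in> borel_measurable HS" for C k unfolding wc_def by measurable
  have wc0: "0 \<le> wc C k h" for C k h unfolding wc_def using w0 by simp
  have wcC: "wc C k h \<le> real C" for C k h unfolding wc_def by simp
  have wcsup: "(\<Sum>i\<in>{1..N}. wc C (Suc k) (x, l@[i])) / real N \<le> wc C k (x, l)" if "length l = k" for C k x l
  proof -
    have "(\<Sum>i\<in>{1..N}. wc C (Suc k) (x, l@[i])) \<le> (\<Sum>i\<in>{1..N}. w (Suc k) (x, l@[i]))"
      by (intro sum_mono) (simp add: wc_def)
    then have a: "(\<Sum>i\<in>{1..N}. wc C (Suc k) (x, l@[i])) / real N \<le> w k (x, l)"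
      using sup[OF that] Npos by (meson divide_right_mono less_imp_le order.trans)
    have "(\<Sum>i\<in>{1..N}. wc C (Suc k) (x, l@[i])) \<le> (\<Sum>i\<in>{1..N}. real C)"
      by (intro sum_mono) (simp add: wc_def)
    then have b: "(\<Sum>i\<in>{1..N}. wc C (Suc k) (x, l@[i])) / real N \<le> real C"
      using Npos by (simp add: divide_le_eq mult.commute)
    show ?thesis using a b by (simp add: wc_def)
  qed
  have conv_C: "AE \<omega> in M. convergent (\<lambda>k. wc C k (hist k \<omega>))" for C
    by (rule bsm_conv[of "wc C" "real C", OF wcm wc0 wcC wcsup])
  then have conv_all: "AE \<omega> in M. \<forall>C. convergent (\<lambda>k. wc C k (hist k \<omega>))"
    by (subst AE_all_countable) auto
  define K where "K = (\<integral>\<omega>. w 0 (hist 0 \<omega>) \<partial>M)"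
  have wcabs: "\<bar>wc C k h\<bar> \<le> real C" for C k h using wc0 wcC by (metis abs_of_nonneg)
  have intwc: "integrable M (\<lambda>\<omega>. wc C k (hist k \<omega>))" for C k
    by (rule int_hist[where B="real C"]) (auto intro: wcabs)
  have Ebound: "(\<integral>\<omega>. wc C k (hist k \<omega>) \<partial>M) \<le> K" for C k
  proof (induction k)
    case 0
    show ?case unfolding K_def
      by (intro Bochner_Integration.integral_mono intwc int0) (simp add: wc_def)
  next
    case (Suc k)
    have "(\<integral>\<omega>. wc C (Suc k) (hist (Suc k) \<omega>) \<partial>M) = (\<integral>\<omega>. (\<Sum>i\<in>{1..N}. wc C (Suc k) (ext (hist k \<omega>) i)) / real N \<partial>M)"
      by (rule KEY[where B="real C"]) (auto intro: wcabs)
    also have "\<dots> \<le> (\<integral>\<omega>. wc C k (hist k \<omega>) \<partial>M)"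
    proof (rule Bochner_Integration.integral_mono)
      show "integrable M (\<lambda>\<omega>. (\<Sum>i\<in>{1..N}. wc C (Suc k) (ext (hist k \<omega>) i)) / real N)"
        by (rule int_bdd[where B="real C"], measurable, rule avg_bound[OF wc0 wcC])
      show "integrable M (\<lambda>\<omega>. wc C k (hist k \<omega>))" by (rule intwc)
      fix \<omega>
      show "(\<Sum>i\<in>{1..N}. wc C (Suc k) (ext (hist k \<omega>) i)) / real N \<le> wc C k (hist k \<omega>)"
        using wcsup[of "snd (hist k \<omega>)" k C "fst (hist k \<omega>)"] by (simp add: ext_def)
    qed
    finally show ?case using Suc by simp
  qed
  define lC where "lC C \<omega> = lim (\<lambda>k. wc C k (hist k \<omega>))" for C \<omega>
  have lCm[measurable]: "lC C \<in> borel_measurable M" for C unfolding lC_def by measurable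
  have lC_lim: "AE \<omega> in M. (\<lambda>k. wc C k (hist k \<omega>)) \<longlonglongrightarrow> lC C \<omega>" for C
    using conv_C[of C] by eventually_elim (simp add: lC_def convergent_LIMSEQ_iff)
  have ElC: "(\<integral>\<omega>. lC C \<omega> \<partial>M) \<le> K" for C
  proof -
    have "(\<lambda>k. \<integral>\<omega>. wc C k (hist k \<omega>) \<partial>M) \<longlonglongrightarrow> (\<integral>\<omega>. lC C \<omega> \<partial>M)"
    proof (rule integral_dominated_convergence[where w="\<lambda>_. real C"])
      show "lC C \<in> borel_measurable M" by measurable
      show "(\<lambda>\<omega>. wc C k (hist k \<omega>)) \<in> borel_measurable M" for k by measurable
      show "integrable M (\<lambda>_. real C)" by simp
      show "AE \<omega> in M. (\<lambda>k. wc C k (hist k \<omega>)) \<longlonglongrightarrow> lC C \<omega>" by (rule lC_lim)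
      show "AE \<omega> in M. norm (wc C k (hist k \<omega>)) \<le> real C" for k using wcabs by simp
    qed
    then show ?thesis by (rule LIMSEQ_le_const2) (use Ebound in auto)
  qed
  have lC_ge: "AE \<omega> in M. 0 \<le> lC C \<omega>" for C
    using lC_lim[of C] by eventually_elim (rule LIMSEQ_le_const[of "\<lambda>k. wc C k (hist k _)"], auto simp: wc0)
  define Z where "Z = {\<omega>\<in>space M. \<forall>C. real C \<le> lC C \<omega>}"
  have Zm[measurable]: "Z \<in> sets M" unfolding Z_def by measurable
  have K0: "0 \<le> K" unfolding K_def by (rule integral_nonneg_AE) (simp add: w0)
  have Zb: "real C * prob Z \<le> K" for C
  proof -
    have "real C * prob Z = (\<integral>\<omega>. real C * indicator Z \<omega> \<partial>M)" using Zm by simp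
    also have "\<dots> \<le> (\<integral>\<omega>. lC C \<omega> \<partial>M)"
    proof (rule integral_mono_AE)
      show "integrable M (\<lambda>\<omega>. real C * indicator Z \<omega>)" using Zm by (simp add: emeasure_eq_measure)
      show "integrable M (lC C)"
        by (rule integrable_dominated_convergence[where w="\<lambda>_. real C" and s="\<lambda>k \<omega>. wc C k (hist k \<omega>)"])
           (auto intro: lC_lim wcabs)
      show "AE \<omega> in M. real C * indicator Z \<omega> \<le> lC C \<omega>"
        using lC_ge[of C] by eventually_elim (auto simp: indicator_def Z_def)
    qed
    also have "\<dots> \<le> K" by (rule ElC)
    finally show ?thesis .
  qed
  have "prob Z = 0"
  proof (rule ccontr)
    assume "prob Z \<noteq> 0"
    then have pZ: "0 < prob Z" using measure_nonneg[of M Z] by linarith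
    obtain C :: nat where "K / prob Z < real C" using reals_Archimedean2 by blast
    then have "K < real C * prob Z" using pZ by (simp add: divide_less_eq)
    then show False using Zb[of C] by simp
  qed
  then have "Z \<in> null_sets M" using Zm by (simp add: emeasure_eq_measure null_sets_def)
  from AE_not_in[OF this] conv_all AE_space show ?thesis
  proof eventually_elim
    case (elim \<omega>)
    then obtain C where lt: "lC C \<omega> < real C" unfolding Z_def by (auto simp: not_le)
    have cC: "convergent (\<lambda>k. wc C k (hist k \<omega>))" using elim(2) by blast
    have tC: "(\<lambda>k. wc C k (hist k \<omega>)) \<longlonglongrightarrow> lC C \<omega>"
      using cC by (simp add: lC_def convergent_LIMSEQ_iff)
    have "eventually (\<lambda>k. wc C k (hist k \<omega>) < real C) sequentially" using order_tendstoD(2)[OF tC lt] .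
    then have "eventually (\<lambda>k. wc C k (hist k \<omega>) = w k (hist k \<omega>)) sequentially"
      by eventually_elim (simp add: wc_def min_def split: if_splits)
    then show ?case using cC by (simp add: convergent_cong)
  qed
qed

end

lemma sq3:
  fixes p q r :: real
  shows "(p+q+r)\<^sup>2 \<le> 3*(p\<^sup>2+q\<^sup>2+r\<^sup>2)"
proof -
  have h: "(p+q+r)\<^sup>2 = 3*(p\<^sup>2+q\<^sup>2+r\<^sup>2) - ((p-q)\<^sup>2+(q-r)\<^sup>2+(p-r)\<^sup>2)"
    by (simp add: power2_eq_square algebra_simps)
  have "0 \<le> (p-q)\<^sup>2+(q-r)\<^sup>2+(p-r)\<^sup>2" by simp
  then show ?thesis using h by linarith
qed

lemma norm3_sq:
  fixes a b c :: "'v::real_inner"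
  shows "(norm (a + b + c))\<^sup>2 \<le> 3 * ((norm a)\<^sup>2 + (norm b)\<^sup>2 + (norm c)\<^sup>2)"
proof -
  have "norm (a + b + c) \<le> norm a + norm b + norm c" by (meson norm_triangle_le order.refl add_mono norm_triangle_ineq)
  then have "(norm (a + b + c))\<^sup>2 \<le> (norm a + norm b + norm c)\<^sup>2" by (simp add: power_mono)
  also have "\<dots> \<le> 3 * ((norm a)\<^sup>2 + (norm b)\<^sup>2 + (norm c)\<^sup>2)"
    using sq3[of "norm a" "norm b" "norm c"] .
  finally show ?thesis .
qed

lemma sum_norm_sq_center:
  fixes D :: "nat \<Rightarrow> 'v::real_inner"
  assumes I: "finite I" "card I > 0"
  defines "Db \<equiv> (1 / real (card I)) *\<^sub>R (\<Sum>k\<in>I. D k)"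
  shows "(\<Sum>k\<in>I. (norm (D k - Db))\<^sup>2) \<le> (\<Sum>k\<in>I. (norm (D k))\<^sup>2)"
proof -
  let ?n = "real (card I)"
  have n0: "?n > 0" using I by simp
  have sumD: "(\<Sum>k\<in>I. D k) = ?n *\<^sub>R Db" unfolding Db_def using n0 by simp
  have "(\<Sum>k\<in>I. (norm (D k - Db))\<^sup>2) = (\<Sum>k\<in>I. (norm (D k))\<^sup>2 - 2 * (D k \<bullet> Db) + (norm Db)\<^sup>2)"
    by (intro sum.cong refl) (simp add: power2_norm_eq_inner inner_diff_left inner_diff_right inner_commute)
  also have "\<dots> = (\<Sum>k\<in>I. (norm (D k))\<^sup>2) - 2 * ((\<Sum>k\<in>I. D k) \<bullet> Db) + ?n * (norm Db)\<^sup>2"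
    by (simp add: sum.distrib sum_subtractf sum_distrib_left inner_sum_left)
  also have "\<dots> = (\<Sum>k\<in>I. (norm (D k))\<^sup>2) - ?n * (norm Db)\<^sup>2"
    unfolding sumD by (simp add: power2_norm_eq_inner)
  also have "\<dots> \<le> (\<Sum>k\<in>I. (norm (D k))\<^sup>2)" using n0 by simp
  finally show ?thesis .
qed

lemma sum_norm_sq_step:
  fixes d :: "nat \<Rightarrow> 'v::real_inner"
  shows "(\<Sum>k\<in>I. (norm (e - \<gamma> *\<^sub>R d k))\<^sup>2) = real (card I) * (norm e)\<^sup>2 - 2 * \<gamma> * (e \<bullet> (\<Sum>k\<in>I. d k)) + \<gamma>\<^sup>2 * (\<Sum>k\<in>I. (norm (d k))\<^sup>2)"
proof -
  have "(\<Sum>k\<in>I. (norm (e - \<gamma> *\<^sub>R d k))\<^sup>2) = (\<Sum>k\<in>I. (norm e)\<^sup>2 - 2 * \<gamma> * (e \<bullet> d k) + \<gamma>\<^sup>2 * (norm (d k))\<^sup>2)"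
    by (intro sum.cong refl) (unfold power2_norm_eq_inner, simp add: inner_diff_left inner_diff_right inner_commute power2_eq_square algebra_simps)
  also have "\<dots> = real (card I) * (norm e)\<^sup>2 - 2 * \<gamma> * (e \<bullet> (\<Sum>k\<in>I. d k)) + \<gamma>\<^sup>2 * (\<Sum>k\<in>I. (norm (d k))\<^sup>2)"
    by (simp add: sum.distrib sum_subtractf sum_distrib_left inner_sum_right)
  finally show ?thesis .
qed

definition Sgf :: "nat \<Rightarrow> (nat \<Rightarrow> 'v \<Rightarrow> 'v::real_normed_vector) \<Rightarrow> 'v \<Rightarrow> (nat \<Rightarrow> 'v) \<Rightarrow> real" where
  "Sgf N G xs g = (1 / real N) * (\<Sum>k=1..N. (norm (g k - G k xs))\<^sup>2)"

lemma Sgf_nonneg: "0 \<le> Sgf N G xs g"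
  unfolding Sgf_def by (intro mult_nonneg_nonneg sum_nonneg) auto

lemma sum_upd:
  fixes f :: "'b \<Rightarrow> nat \<Rightarrow> real"
  assumes "finite I" "k \<in> I"
  shows "(\<Sum>j\<in>I. f ((g(k:=v)) j) j) = (\<Sum>j\<in>I. f (g j) j) - f (g k) k + f v k"
proof -
  have "(\<Sum>j\<in>I. f ((g(k:=v)) j) j) = f v k + (\<Sum>j\<in>I - {k}. f ((g(k:=v)) j) j)"
    using assms by (simp add: sum.remove)
  also have "(\<Sum>j\<in>I - {k}. f ((g(k:=v)) j) j) = (\<Sum>j\<in>I - {k}. f (g j) j)"
    by (intro sum.cong refl) auto
  also have "\<dots> = (\<Sum>j\<in>I. f (g j) j) - f (g k) k"
    using assms by (simp add: sum_diff1)
  finally show ?thesis by simp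
qed

lemma onestep:
  fixes G :: "nat \<Rightarrow> 'v::real_inner \<Rightarrow> 'v" and g :: "nat \<Rightarrow> 'v"
  assumes N: "N \<ge> 1" and lam: "0 \<le> lam" "lam \<le> 1" and crit: "avg_fun N G xs = 0"
    and A3x: "(1 / real N) * (\<Sum>k=1..N. (norm (G k x - G k xs))\<^sup>2) \<le> L * (norm (x - xs))\<^sup>2"
    and L: "0 \<le> L" and gp: "0 \<le> \<gamma>" and g': "0 \<le> \<gamma>'" "\<gamma>' \<le> \<gamma>"
  defines "\<sigma>2 \<equiv> (1 / real N) * (\<Sum>k=1..N. (norm (G k xs))\<^sup>2)"
  shows "(\<Sum>k=1..N. (norm (x - \<gamma> *\<^sub>R (G k x - lam *\<^sub>R (g k - avg_fun N (\<lambda>j _. g j) x)) - xs))\<^sup>2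
              + 3 * real N * \<gamma>'\<^sup>2 * Sgf N G xs (g(k := G k x))) / real N
     \<le> (1 + 6 * L * \<gamma>\<^sup>2) * ((norm (x - xs))\<^sup>2 + 3 * real N * \<gamma>\<^sup>2 * Sgf N G xs g) + 3 * \<sigma>2 * \<gamma>\<^sup>2
        - 2 * \<gamma> * ((x - xs) \<bullet> avg_fun N G x)"
proof -
  define I where "I = {1..N}"
  define n where "n = real N"
  have n0: "0 < n" using N by (simp add: n_def)
  have cI: "card I = N" "finite I" unfolding I_def by auto
  define e where "e = x - xs"
  define D where "D k = g k - G k xs" for k
  define Gt where "Gt k = G k x - G k xs" for k
  define Db where "Db = (1 / n) *\<^sub>R (\<Sum>k\<in>I. D k)"
  define hx where "hx = avg_fun N G x"
  define S where "S = Sgf N G xs g"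
  have S_def': "S = (1 / n) * (\<Sum>k\<in>I. (norm (D k))\<^sup>2)" unfolding S_def Sgf_def D_def I_def n_def by simp
  have S0: "0 \<le> S" unfolding S_def by (rule Sgf_nonneg)
  have Sxs: "(\<Sum>k\<in>I. G k xs) = 0" using crit n0 unfolding avg_fun_def I_def n_def by simp
  have Sg: "(\<Sum>k\<in>I. g k) = (\<Sum>k\<in>I. D k)" unfolding D_def using Sxs by (simp add: sum_subtractf)
  have gb: "avg_fun N (\<lambda>j _. g j) x = Db"
  proof -
    have "avg_fun N (\<lambda>j _. g j) x = (1 / n) *\<^sub>R (\<Sum>k\<in>I. g k)" unfolding avg_fun_def I_def n_def by simp
    then show ?thesis unfolding Sg Db_def .
  qed
  define d where "d k = G k x - lam *\<^sub>R (g k - Db)" for k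
  have dd: "d k = Gt k + (- lam *\<^sub>R (D k - Db)) + (1 - lam) *\<^sub>R G k xs" for k
    unfolding d_def Gt_def D_def by (simp add: algebra_simps)
  have sumd: "(\<Sum>k\<in>I. d k) = n *\<^sub>R hx"
  proof -
    have "(\<Sum>k\<in>I. d k) = (\<Sum>k\<in>I. G k x) - lam *\<^sub>R ((\<Sum>k\<in>I. g k) - n *\<^sub>R Db)"
      unfolding d_def using cI by (simp add: sum_subtractf scaleR_sum_right n_def scaleR_diff_right sum_constant_scaleR)
    also have "n *\<^sub>R Db = (\<Sum>k\<in>I. g k)" unfolding Db_def Sg using n0 by simp
    finally show ?thesis unfolding hx_def avg_fun_def I_def n_def using n0 by simp
  qed
  have sGt: "(\<Sum>k\<in>I. (norm (Gt k))\<^sup>2) \<le> n * L * (norm e)\<^sup>2"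
    using A3x n0 unfolding I_def Gt_def e_def n_def by (simp add: field_simps)
  have sGt0: "0 \<le> (\<Sum>k\<in>I. (norm (Gt k))\<^sup>2)" by (intro sum_nonneg) auto
  have s\<sigma>: "(\<Sum>k\<in>I. (norm (G k xs))\<^sup>2) = n * \<sigma>2" unfolding \<sigma>2_def I_def n_def using n0 by (simp add: n_def)
  have sD: "(\<Sum>k\<in>I. (norm (D k))\<^sup>2) = n * S" unfolding S_def' using n0 by simp
  have p1: "(\<Sum>k\<in>I. (norm (e - \<gamma> *\<^sub>R d k))\<^sup>2) = n * (norm e)\<^sup>2 - 2 * \<gamma> * n * (e \<bullet> hx) + \<gamma>\<^sup>2 * (\<Sum>k\<in>I. (norm (d k))\<^sup>2)"
    unfolding sum_norm_sq_step sumd using cI by (simp add: n_def)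
  have p2: "(\<Sum>k\<in>I. (norm (d k))\<^sup>2) \<le> 3 * (n * L * (norm e)\<^sup>2 + n * S + n * \<sigma>2)"
  proof -
    have "(\<Sum>k\<in>I. (norm (d k))\<^sup>2) \<le> (\<Sum>k\<in>I. 3 * ((norm (Gt k))\<^sup>2 + (norm (D k - Db))\<^sup>2 + (norm (G k xs))\<^sup>2))"
    proof (rule sum_mono)
      fix k
      have "(norm (d k))\<^sup>2 \<le> 3 * ((norm (Gt k))\<^sup>2 + (norm (- lam *\<^sub>R (D k - Db)))\<^sup>2 + (norm ((1 - lam) *\<^sub>R G k xs))\<^sup>2)"
        unfolding dd by (rule norm3_sq)
      also have "(norm (- lam *\<^sub>R (D k - Db)))\<^sup>2 \<le> (norm (D k - Db))\<^sup>2"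
        using lam by (simp add: power_mult_distrib power_le_one mult_left_le_one_le)
      also have "(norm ((1 - lam) *\<^sub>R G k xs))\<^sup>2 \<le> (norm (G k xs))\<^sup>2"
        using lam by (simp add: power_mult_distrib power_le_one mult_left_le_one_le)
      finally show "(norm (d k))\<^sup>2 \<le> 3 * ((norm (Gt k))\<^sup>2 + (norm (D k - Db))\<^sup>2 + (norm (G k xs))\<^sup>2)" by simp
    qed
    also have "\<dots> = 3 * ((\<Sum>k\<in>I. (norm (Gt k))\<^sup>2) + (\<Sum>k\<in>I. (norm (D k - Db))\<^sup>2) + (\<Sum>k\<in>I. (norm (G k xs))\<^sup>2))"
      by (simp add: sum.distrib sum_distrib_left)
    also have "(\<Sum>k\<in>I. (norm (D k - Db))\<^sup>2) \<le> (\<Sum>k\<in>I. (norm (D k))\<^sup>2)"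
      unfolding Db_def using cI N sum_norm_sq_center[of I D] by (simp add: n_def)
    finally show ?thesis using sGt sD s\<sigma> by simp
  qed
  have p3: "(\<Sum>k\<in>I. Sgf N G xs (g(k := G k x))) \<le> (n - 1) * S + L * (norm e)\<^sup>2"
  proof -
    have "Sgf N G xs (g(k := G k x)) = S + ((norm (Gt k))\<^sup>2 - (norm (D k))\<^sup>2) / n" if k: "k \<in> I" for k
    proof -
      have "(\<Sum>j\<in>I. (norm ((g(k := G k x)) j - G j xs))\<^sup>2) = (\<Sum>j\<in>I. (norm (D j))\<^sup>2) - (norm (D k))\<^sup>2 + (norm (Gt k))\<^sup>2"
        using sum_upd[OF cI(2) k, of "\<lambda>y j. (norm (y - G j xs))\<^sup>2" g "G k x"] by (simp add: D_def Gt_def)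
      then show ?thesis unfolding Sgf_def S_def' I_def[symmetric] n_def[symmetric] using n0 by (simp add: field_simps)
    qed
    then have "(\<Sum>k\<in>I. Sgf N G xs (g(k := G k x))) = (\<Sum>k\<in>I. S + ((norm (Gt k))\<^sup>2 - (norm (D k))\<^sup>2) / n)"
      by (intro sum.cong refl) auto
    also have "\<dots> = n * S + ((\<Sum>k\<in>I. (norm (Gt k))\<^sup>2) - (\<Sum>k\<in>I. (norm (D k))\<^sup>2)) / n"
      using cI by (simp add: sum.distrib sum_subtractf sum_divide_distrib[symmetric] n_def)
    also have "\<dots> = (n - 1) * S + (\<Sum>k\<in>I. (norm (Gt k))\<^sup>2) / n"
      unfolding sD using n0 by (simp add: field_simps)
    also have "(\<Sum>k\<in>I. (norm (Gt k))\<^sup>2) / n \<le> L * (norm e)\<^sup>2"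
      using sGt n0 by (simp add: divide_le_eq mult.commute mult.left_commute)
    finally show ?thesis by simp
  qed
  have LHS: "(\<Sum>k=1..N. (norm (x - \<gamma> *\<^sub>R (G k x - lam *\<^sub>R (g k - avg_fun N (\<lambda>j _. g j) x)) - xs))\<^sup>2
              + 3 * real N * \<gamma>'\<^sup>2 * Sgf N G xs (g(k := G k x))) / real N
        = ((\<Sum>k\<in>I. (norm (e - \<gamma> *\<^sub>R d k))\<^sup>2) + 3 * n * \<gamma>'\<^sup>2 * (\<Sum>k\<in>I. Sgf N G xs (g(k := G k x)))) / n"
  proof -
    have "x - \<gamma> *\<^sub>R (G k x - lam *\<^sub>R (g k - avg_fun N (\<lambda>j _. g j) x)) - xs = e - \<gamma> *\<^sub>R d k" for k
      unfolding gb d_def e_def by (simp add: algebra_simps)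
    then show ?thesis unfolding I_def n_def by (simp add: sum.distrib sum_distrib_left)
  qed
  have g2: "\<gamma>'\<^sup>2 \<le> \<gamma>\<^sup>2" using g' by (simp add: power_mono)
  have q0: "0 \<le> (n - 1) * S + L * (norm e)\<^sup>2" using N S0 L by (simp add: n_def)
  have "(\<Sum>k\<in>I. (norm (e - \<gamma> *\<^sub>R d k))\<^sup>2) + 3 * n * \<gamma>'\<^sup>2 * (\<Sum>k\<in>I. Sgf N G xs (g(k := G k x)))
      \<le> (n * (norm e)\<^sup>2 - 2 * \<gamma> * n * (e \<bullet> hx) + \<gamma>\<^sup>2 * (3 * (n * L * (norm e)\<^sup>2 + n * S + n * \<sigma>2)))
        + 3 * n * \<gamma>\<^sup>2 * ((n - 1) * S + L * (norm e)\<^sup>2)"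
  proof (rule add_mono)
    show "(\<Sum>k\<in>I. (norm (e - \<gamma> *\<^sub>R d k))\<^sup>2) \<le> n * (norm e)\<^sup>2 - 2 * \<gamma> * n * (e \<bullet> hx) + \<gamma>\<^sup>2 * (3 * (n * L * (norm e)\<^sup>2 + n * S + n * \<sigma>2))"
      unfolding p1 using p2 by (simp add: mult_left_mono)
    have "3 * n * \<gamma>'\<^sup>2 * (\<Sum>k\<in>I. Sgf N G xs (g(k := G k x))) \<le> 3 * n * \<gamma>'\<^sup>2 * ((n - 1) * S + L * (norm e)\<^sup>2)"
      using p3 n0 by (intro mult_left_mono) auto
    also have "\<dots> \<le> 3 * n * \<gamma>\<^sup>2 * ((n - 1) * S + L * (norm e)\<^sup>2)"
      using g2 q0 n0 by (intro mult_right_mono mult_left_mono) auto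
    finally show "3 * n * \<gamma>'\<^sup>2 * (\<Sum>k\<in>I. Sgf N G xs (g(k := G k x))) \<le> 3 * n * \<gamma>\<^sup>2 * ((n - 1) * S + L * (norm e)\<^sup>2)" .
  qed
  also have "\<dots> = n * ((norm e)\<^sup>2 * (1 + 6 * L * \<gamma>\<^sup>2) + 3 * n * \<gamma>\<^sup>2 * S + 3 * \<sigma>2 * \<gamma>\<^sup>2 - 2 * \<gamma> * (e \<bullet> hx))"
    by (simp add: algebra_simps power2_eq_square)
  finally have main: "((\<Sum>k\<in>I. (norm (e - \<gamma> *\<^sub>R d k))\<^sup>2) + 3 * n * \<gamma>'\<^sup>2 * (\<Sum>k\<in>I. Sgf N G xs (g(k := G k x)))) / n
      \<le> (norm e)\<^sup>2 * (1 + 6 * L * \<gamma>\<^sup>2) + 3 * n * \<gamma>\<^sup>2 * S + 3 * \<sigma>2 * \<gamma>\<^sup>2 - 2 * \<gamma> * (e \<bullet> hx)"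
    using n0 by (simp add: divide_le_eq mult.commute)
  have extra: "0 \<le> 6 * L * \<gamma>\<^sup>2 * (3 * n * \<gamma>\<^sup>2 * S)" using L S0 n0 by simp
  show ?thesis unfolding LHS using main extra
    unfolding e_def[symmetric] hx_def[symmetric] S_def[symmetric] n_def[symmetric]
    by (simp add: algebra_simps)
qed

lemma saga_state_cong:
  assumes "\<And>i. 2 \<le> i \<Longrightarrow> i \<le> m + 1 \<Longrightarrow> u i = u' i"
  shows "saga_state N G lam gam x0 x1 u m = saga_state N G lam gam x0 x1 u' m"
  using assms
proof (induction m)
  case 0 then show ?case by simp
next
  case (Suc m)
  have IH: "saga_state N G lam gam x0 x1 u m = saga_state N G lam gam x0 x1 u' m"
    using Suc.prems by (intro Suc.IH) auto
  have "u (Suc (Suc m)) = u' (Suc (Suc m))" using Suc.prems by simp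
  then show ?case by (simp add: IH)
qed

lemma saga_state_Suc':
  "saga_state N G lam gam x0 x1 u (Suc m) =
     (fst (saga_state N G lam gam x0 x1 u m) - gam (Suc m) *\<^sub>R (G (u (m+2)) (fst (saga_state N G lam gam x0 x1 u m))
        - lam *\<^sub>R (snd (saga_state N G lam gam x0 x1 u m) (u (m+2)) - avg_fun N (\<lambda>j _. snd (saga_state N G lam gam x0 x1 u m) j) (fst (saga_state N G lam gam x0 x1 u m)))),
      (snd (saga_state N G lam gam x0 x1 u m))(u (m+2) := G (u (m+2)) (fst (saga_state N G lam gam x0 x1 u m))))"
  by (simp add: Let_def split: prod.split)

locale saga_alg = saga_prob M N XX U for M :: "'a measure" and N and XX :: "'a \<Rightarrow> ('v::euclidean_space \<times> 'v)" and U +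
  fixes G :: "nat \<Rightarrow> 'v \<Rightarrow> 'v" and lam :: real and gam :: "nat \<Rightarrow> real" and xstar :: 'v and L :: real
  assumes Gm: "\<And>k. k \<in> {1..N} \<Longrightarrow> G k \<in> borel_measurable borel"
  and lam: "0 \<le> lam" "lam \<le> 1"
  and gam_pos: "\<And>n. n \<ge> 1 \<Longrightarrow> gam n > 0"
  and gam_decr: "\<And>n. n \<ge> 1 \<Longrightarrow> gam (Suc n) \<le> gam n"
  and gam_lim: "gam \<longlonglongrightarrow> 0"
  and gam_sum: "\<not> summable gam"
  and gam_sq: "summable (\<lambda>n. (gam n)\<^sup>2)"
  and h_cont: "continuous_on UNIV (avg_fun N G)"
  and crit: "avg_fun N G xstar = 0"
  and A2: "\<And>x. x \<noteq> xstar \<Longrightarrow> (x - xstar) \<bullet> avg_fun N G x > 0"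
  and L: "L > 0"
  and A3: "\<And>x. (1 / real N) * (\<Sum>k = 1..N. (norm (G k x - G k xstar))\<^sup>2) \<le> L * (norm (x - xstar))\<^sup>2"
  and X0int: "integrable M (\<lambda>\<omega>. (norm (fst (XX \<omega>)))\<^sup>2)"
  and X1int: "integrable M (\<lambda>\<omega>. (norm (snd (XX \<omega>)))\<^sup>2)"
begin

definition uc :: "nat list \<Rightarrow> nat \<Rightarrow> nat" where
  "uc l i = (if l ! (i - 2) \<in> {1..N} then l ! (i - 2) else 1)"

lemma uc_range: "uc l i \<in> {1..N}" using N by (simp add: uc_def)

definition stm :: "nat \<Rightarrow> ('v \<times> 'v) \<times> nat list \<Rightarrow> 'v \<times> (nat \<Rightarrow> 'v)" where
  "stm m h = saga_state N G lam gam (fst (fst h)) (snd (fst h)) (uc (snd h)) m"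

lemma stm_0: "stm 0 h = (snd (fst h), \<lambda>k. G k (fst (fst h)))"
  by (simp add: stm_def)

lemma stm_ext:
  assumes l: "length l = m" and i: "i \<in> {1..N}"
  shows "stm (Suc m) (z, l@[i]) =
     (fst (stm m (z,l)) - gam (Suc m) *\<^sub>R (G i (fst (stm m (z,l))) - lam *\<^sub>R (snd (stm m (z,l)) i - avg_fun N (\<lambda>j _. snd (stm m (z,l)) j) (fst (stm m (z,l))))),
      (snd (stm m (z,l)))(i := G i (fst (stm m (z,l)))))"
proof -
  have c: "saga_state N G lam gam (fst z) (snd z) (uc (l@[i])) m = saga_state N G lam gam (fst z) (snd z) (uc l) m"
    by (rule saga_state_cong) (use l in \<open>auto simp: uc_def nth_append\<close>)
  have u: "uc (l@[i]) (m+2) = i" using l i by (simp add: uc_def nth_append)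
  show ?thesis unfolding stm_def fst_conv snd_conv saga_state_Suc' c u ..
qed

lemma hist_stm:
  assumes "\<forall>n\<ge>2. U n \<omega> \<in> {1..N}"
  shows "saga_state N G lam gam (fst (XX \<omega>)) (snd (XX \<omega>)) (\<lambda>n. U n \<omega>) m = stm m (hist m \<omega>)"
  unfolding stm_def hist_def fst_conv snd_conv
  by (rule saga_state_cong) (use assms in \<open>auto simp: uc_def intro!: arg_cong[where f="\<lambda>n. U n \<omega>"]\<close>)

lemma fst_borel[measurable]: "fst \<in> measurable (borel :: ('v \<times> 'v) measure) borel"
  by (intro borel_measurable_continuous_onI continuous_on_fst continuous_on_id)

lemma snd_borel[measurable]: "snd \<in> measurable (borel :: ('v \<times> 'v) measure) borel"
  by (intro borel_measurable_continuous_onI continuous_on_snd continuous_on_id)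

lemma HS_meas:
  fixes f :: "('v \<times> 'v) \<times> nat list \<Rightarrow> real"
  assumes "\<And>l. (\<lambda>z. f (z, l)) \<in> borel_measurable borel"
  shows "f \<in> borel_measurable HS"
proof -
  have "(\<lambda>h. (\<lambda>l z. f (z, l)) (snd h) (fst h)) \<in> borel_measurable HS"
  proof (rule measurable_compose_countable[where g=snd])
    fix l show "(\<lambda>h. f (fst h, l)) \<in> borel_measurable HS"
      using assms[of l] unfolding HS_def by measurable
    show "snd \<in> measurable HS (count_space UNIV)" unfolding HS_def by measurable
  qed
  then show ?thesis by simp
qed

lemma path_meas:
  assumes u: "\<And>i. u i \<in> {1..N}"
  shows "(\<lambda>z. fst (saga_state N G lam gam (fst z) (snd z) u m)) \<in> borel_measurable borel \<and>
         (\<forall>k\<in>{1..N}. (\<lambda>z. snd (saga_state N G lam gam (fst z) (snd z) u m) k) \<in> borel_measurable borel)"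
proof (induction m)
  case 0
  have "(\<lambda>z::'v\<times>'v. G k (fst z)) \<in> borel_measurable borel" if "k \<in> {1..N}" for k
    using measurable_compose[OF fst_borel Gm[OF that]] by (simp add: o_def)
  moreover have "(\<lambda>z::'v\<times>'v. snd z) \<in> borel_measurable borel" using snd_borel by simp
  ultimately show ?case by simp
next
  case (Suc m)
  define xf where "xf z = fst (saga_state N G lam gam (fst z) (snd z) u m)" for z :: "'v \<times> 'v"
  define gf where "gf k z = snd (saga_state N G lam gam (fst z) (snd z) u m) k" for k and z :: "'v \<times> 'v"
  have xm[measurable]: "xf \<in> borel_measurable borel" using Suc unfolding xf_def by simp
  have gm: "gf k \<in> borel_measurable borel" if "k \<in> {1..N}" for k using Suc that unfolding gf_def by simp
  define k0 where "k0 = u (m+2)"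
  have k0: "k0 \<in> {1..N}" using u by (simp add: k0_def)
  note Gk0[measurable] = Gm[OF k0]
  note gk0[measurable] = gm[OF k0]
  have Gx: "(\<lambda>z. G k (xf z)) \<in> borel_measurable borel" if "k \<in> {1..N}" for k
    using Gm[OF that] by measurable
  have avgm[measurable]: "(\<lambda>z. avg_fun N (\<lambda>j _. gf j z) (xf z)) \<in> borel_measurable borel"
    unfolding avg_fun_def using gm by measurable
  have "(\<lambda>z. xf z - gam (Suc m) *\<^sub>R (G k0 (xf z) - lam *\<^sub>R (gf k0 z - avg_fun N (\<lambda>j _. gf j z) (xf z)))) \<in> borel_measurable borel"
    by measurable
  moreover have "(\<lambda>z. ((\<lambda>k. gf k z)(k0 := G k0 (xf z))) k) \<in> borel_measurable borel" if "k \<in> {1..N}" for k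
    using gm[OF that] Gx[OF that] by (cases "k = k0") auto
  ultimately show ?case
    unfolding saga_state_Suc' xf_def[symmetric] gf_def[symmetric] k0_def[symmetric]
    by (simp add: xf_def gf_def)
qed

lemma stm_meas:
  shows "(\<lambda>z. fst (stm m (z, l))) \<in> borel_measurable borel"
    and "k \<in> {1..N} \<Longrightarrow> (\<lambda>z. snd (stm m (z, l)) k) \<in> borel_measurable borel"
  using path_meas[of "uc l" m, OF uc_range] unfolding stm_def by auto

end

context saga_alg begin

definition "hf = avg_fun N G"
definition "\<sigma>2 = (1 / real N) * (\<Sum>k=1..N. (norm (G k xstar))\<^sup>2)"
definition "Vf m h = (norm (fst (stm m h) - xstar))\<^sup>2 + 3 * real N * (gam (Suc m))\<^sup>2 * Sgf N G xstar (snd (stm m h))"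
definition "cf m h = 2 * gam (Suc m) * ((fst (stm m h) - xstar) \<bullet> hf (fst (stm m h)))"
definition "af j = 6 * L * (gam (Suc j))\<^sup>2"
definition "bf j = 3 * \<sigma>2 * (gam (Suc j))\<^sup>2"
definition "Pf m = (\<Prod>j<m. 1 + af j)"
definition "tb j = bf j / Pf (Suc j)"
definition "Tt m = suminf tb - (\<Sum>j<m. tb j)"
definition "Cacc m h = (\<Sum>j<m. cf j (trunc j h) / Pf (Suc j))"
definition "Wf m h = Vf m h / Pf m + Cacc m h + Tt m"

lemma hf_meas[measurable]: "hf \<in> borel_measurable borel"
  unfolding hf_def by (rule borel_measurable_continuous_onI[OF h_cont])

lemma af0: "0 \<le> af j" using L by (simp add: af_def)
lemma \<sigma>20: "0 \<le> \<sigma>2" unfolding \<sigma>2_def by (intro mult_nonneg_nonneg sum_nonneg) auto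
lemma bf0: "0 \<le> bf j" using \<sigma>20 by (simp add: bf_def)
lemma Pf1: "1 \<le> Pf m" unfolding Pf_def using af0 by (intro prod_ge_1) (simp add: add_increasing2)
lemma Pf_pos: "0 < Pf m" using Pf1[of m] by simp
lemma Pf_Suc: "Pf (Suc m) = (1 + af m) * Pf m" by (simp add: Pf_def)
lemma tb0: "0 \<le> tb j" unfolding tb_def using bf0[of j] Pf_pos[of "Suc j"] by simp
lemma sum_gam2: "summable (\<lambda>j. (gam (Suc j))\<^sup>2)" using summable_Suc_iff[of "\<lambda>n. (gam n)\<^sup>2"] gam_sq by simp
lemma bf_summ: "summable bf" unfolding bf_def using sum_gam2 by (intro summable_mult) 
lemma af_summ: "summable af" unfolding af_def using sum_gam2 by (intro summable_mult)
lemma tb_summ: "summable tb"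
proof (rule summable_comparison_test'[OF bf_summ])
  fix n show "norm (tb n) \<le> bf n" unfolding tb_def using bf0 Pf1[of "Suc n"] tb0[of n]
    by (simp add: tb_def divide_le_eq_1 divide_le_cancel) (smt (verit) divide_le_eq mult_le_cancel_left1)
qed
lemma Tt0: "0 \<le> Tt m" unfolding Tt_def using sum_le_suminf[OF tb_summ, of "{..<m}"] tb0 by auto
lemma Tt_Suc: "Tt (Suc m) = Tt m - tb m" by (simp add: Tt_def)

lemma cf0: "0 \<le> cf m h"
proof (cases "fst (stm m h) = xstar")
  case True then show ?thesis by (simp add: cf_def)
next
  case False
  then have "0 < (fst (stm m h) - xstar) \<bullet> hf (fst (stm m h))" unfolding hf_def by (rule A2)
  moreover have "0 < gam (Suc m)" by (rule gam_pos) simp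
  ultimately show ?thesis by (simp add: cf_def)
qed

lemma Vf0: "0 \<le> Vf m h" unfolding Vf_def using Sgf_nonneg[of N G xstar] by (intro add_nonneg_nonneg mult_nonneg_nonneg) auto

lemma Cacc0: "0 \<le> Cacc m h" unfolding Cacc_def using cf0 Pf_pos by (intro sum_nonneg divide_nonneg_pos) auto

lemma Wf0: "0 \<le> Wf m h" unfolding Wf_def using Vf0 Pf_pos Cacc0 Tt0 by (intro add_nonneg_nonneg divide_nonneg_pos) auto

lemma Sgf_meas:
  assumes "\<And>k. k \<in> {1..N} \<Longrightarrow> (\<lambda>z. g z k) \<in> borel_measurable borel"
  shows "(\<lambda>z. Sgf N G xstar (g z)) \<in> borel_measurable borel"
  unfolding Sgf_def using assms by measurable

lemma Vf_meas: "Vf m \<in> borel_measurable HS"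
proof (rule HS_meas)
  fix l
  have [measurable]: "(\<lambda>z. fst (stm m (z, l))) \<in> borel_measurable borel" by (rule stm_meas)
  have [measurable]: "(\<lambda>z. Sgf N G xstar (snd (stm m (z, l)))) \<in> borel_measurable borel"
    by (rule Sgf_meas) (rule stm_meas)
  show "(\<lambda>z. Vf m (z, l)) \<in> borel_measurable borel" unfolding Vf_def by measurable
qed

lemma cf_meas: "cf m \<in> borel_measurable HS"
proof (rule HS_meas)
  fix l
  have [measurable]: "(\<lambda>z. fst (stm m (z, l))) \<in> borel_measurable borel" by (rule stm_meas)
  show "(\<lambda>z. cf m (z, l)) \<in> borel_measurable borel" unfolding cf_def by measurable
qed

lemma Wf_meas[measurable]: "Wf m \<in> borel_measurable HS"
proof -
  note Vf_meas[measurable] cf_meas[measurable]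
  show ?thesis unfolding Wf_def Cacc_def by measurable
qed

lemma Vf_step:
  assumes l: "length l = m"
  shows "(\<Sum>i\<in>{1..N}. Vf (Suc m) (z, l@[i])) / real N \<le> (1 + af m) * Vf m (z, l) + bf m - cf m (z, l)"
proof -
  define x where "x = fst (stm m (z,l))"
  define g where "g = snd (stm m (z,l))"
  have gp: "0 \<le> gam (Suc m)" using gam_pos[of "Suc m"] by simp
  have g': "0 \<le> gam (Suc (Suc m))" "gam (Suc (Suc m)) \<le> gam (Suc m)"
    using gam_pos[of "Suc (Suc m)"] gam_decr[of "Suc m"] by auto
  have "(\<Sum>i\<in>{1..N}. Vf (Suc m) (z, l@[i])) = (\<Sum>k=1..N. (norm (x - gam (Suc m) *\<^sub>R (G k x - lam *\<^sub>R (g k - avg_fun N (\<lambda>j _. g j) x)) - xstar))\<^sup>2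
              + 3 * real N * (gam (Suc (Suc m)))\<^sup>2 * Sgf N G xstar (g(k := G k x)))"
    by (intro sum.cong refl) (simp add: Vf_def stm_ext[OF l] x_def g_def)
  then have "(\<Sum>i\<in>{1..N}. Vf (Suc m) (z, l@[i])) / real N \<le> (1 + 6 * L * (gam (Suc m))\<^sup>2) * ((norm (x - xstar))\<^sup>2 + 3 * real N * (gam (Suc m))\<^sup>2 * Sgf N G xstar g) + 3 * \<sigma>2 * (gam (Suc m))\<^sup>2
        - 2 * gam (Suc m) * ((x - xstar) \<bullet> avg_fun N G x)"
    using onestep[OF N lam crit A3[of x] _ gp g', of g] L unfolding \<sigma>2_def by simp
  then show ?thesis unfolding Vf_def cf_def af_def bf_def hf_def x_def g_def by simp
qed

lemma trunc_snoc: "j \<le> length l \<Longrightarrow> trunc j (z, l@[i]) = trunc j (z, l)"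
  by (simp add: trunc_def)

lemma Wf_sup:
  assumes l: "length l = m"
  shows "(\<Sum>i\<in>{1..N}. Wf (Suc m) (z, l@[i])) / real N \<le> Wf m (z, l)"
proof -
  have Npos: "0 < real N" using N by simp
  have CS: "Cacc (Suc m) (z, l@[i]) = Cacc m (z, l) + cf m (z, l) / Pf (Suc m)" for i
  proof -
    have "Cacc (Suc m) (z, l@[i]) = (\<Sum>j<Suc m. cf j (trunc j (z, l)) / Pf (Suc j))"
      unfolding Cacc_def using l by (intro sum.cong refl) (simp add: trunc_snoc)
    also have "\<dots> = Cacc m (z, l) + cf m (z, l) / Pf (Suc m)"
      unfolding Cacc_def using l by (simp add: trunc_full)
    finally show ?thesis .
  qed
  have "(\<Sum>i\<in>{1..N}. Wf (Suc m) (z, l@[i])) / real N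
      = (\<Sum>i\<in>{1..N}. Vf (Suc m) (z, l@[i])) / real N / Pf (Suc m) + Cacc m (z, l) + cf m (z, l) / Pf (Suc m) + Tt (Suc m)"
    unfolding Wf_def CS using Npos by (simp add: sum.distrib sum_divide_distrib[symmetric] field_simps)
  also have "\<dots> \<le> ((1 + af m) * Vf m (z, l) + bf m - cf m (z, l)) / Pf (Suc m) + Cacc m (z, l) + cf m (z, l) / Pf (Suc m) + Tt (Suc m)"
    by (intro add_right_mono divide_right_mono Vf_step[OF l]) (use Pf_pos in \<open>simp add: less_imp_le\<close>)
  also have "\<dots> = Wf m (z, l)"
  proof -
    have pp: "0 < (1 + af m) * Pf m" using Pf_pos[of m] af0[of m] by simp
    then have ne: "(1 + af m) * Pf m \<noteq> 0" "Pf m + Pf m * af m \<noteq> 0" "Pf m \<noteq> 0"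
      using Pf_pos[of m] by (auto simp: algebra_simps)
    have 1: "(1 + af m) * Vf m (z, l) / ((1 + af m) * Pf m) = Vf m (z, l) / Pf m"
      using ne by simp
    have 2: "((1 + af m) * Vf m (z, l) + bf m - cf m (z, l)) / ((1 + af m) * Pf m)
        = (1 + af m) * Vf m (z, l) / ((1 + af m) * Pf m) + bf m / ((1 + af m) * Pf m) - cf m (z, l) / ((1 + af m) * Pf m)"
      by (simp add: add_divide_distrib diff_divide_distrib)
    show ?thesis unfolding Wf_def Tt_Suc tb_def Pf_Suc using 1 2 by linarith
  qed
  finally show ?thesis .
qed

end

lemma norm_diff_sq_le: "(norm (a - b))\<^sup>2 \<le> 2 * (norm a)\<^sup>2 + 2 * (norm (b::'v::real_normed_vector))\<^sup>2"
proof -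
  have "norm (a - b) \<le> norm a + norm b" by (rule norm_triangle_ineq4)
  then have "(norm (a - b))\<^sup>2 \<le> (norm a + norm b)\<^sup>2" by (simp add: power_mono)
  also have "\<dots> \<le> 2 * (norm a)\<^sup>2 + 2 * (norm b)\<^sup>2"
    using sum_squares_bound[of "norm a" "norm b"] by (simp add: power2_eq_square algebra_simps)
  finally show ?thesis .
qed

context saga_alg begin

lemma G_term:
  assumes k: "k \<in> {1..N}"
  shows "(norm (G k y - G k xstar))\<^sup>2 \<le> real N * L * (norm (y - xstar))\<^sup>2"
proof -
  have Npos: "0 < real N" using N by simp
  have "(norm (G k y - G k xstar))\<^sup>2 \<le> (\<Sum>j=1..N. (norm (G j y - G j xstar))\<^sup>2)"
    using k by (intro member_le_sum) auto
  also have "\<dots> \<le> real N * L * (norm (y - xstar))\<^sup>2"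
    using A3[of y] Npos by (simp add: field_simps)
  finally show ?thesis .
qed

lemma Wf0_hist: "Wf 0 (hist 0 \<omega>) = (norm (snd (XX \<omega>) - xstar))\<^sup>2 + 3 * real N * (gam (Suc 0))\<^sup>2 * Sgf N G xstar (\<lambda>k. G k (fst (XX \<omega>))) + Tt 0"
  by (simp add: Wf_def Vf_def Pf_def Cacc_def stm_0 hist_def)

lemma int0: "integrable M (\<lambda>\<omega>. Wf 0 (hist 0 \<omega>))"
proof (rule Bochner_Integration.integrable_bound)
  define c where "c = 3 * real N * (gam (Suc 0))\<^sup>2 * L"
  have c0: "0 \<le> c" unfolding c_def using L by simp
  let ?f = "\<lambda>\<omega>. 2 * (norm (snd (XX \<omega>)))\<^sup>2 + 2 * (norm xstar)\<^sup>2 + c * (2 * (norm (fst (XX \<omega>)))\<^sup>2 + 2 * (norm xstar)\<^sup>2) + Tt 0"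
  show "integrable M ?f" using X0int X1int by simp
  show "(\<lambda>\<omega>. Wf 0 (hist 0 \<omega>)) \<in> borel_measurable M" by measurable
  show "AE \<omega> in M. norm (Wf 0 (hist 0 \<omega>)) \<le> norm (?f \<omega>)"
  proof (rule AE_I2)
    fix \<omega>
    have S: "Sgf N G xstar (\<lambda>k. G k (fst (XX \<omega>))) \<le> L * (norm (fst (XX \<omega>) - xstar))\<^sup>2"
      unfolding Sgf_def using A3 by simp
    have a: "3 * real N * (gam (Suc 0))\<^sup>2 * Sgf N G xstar (\<lambda>k. G k (fst (XX \<omega>))) \<le> c * (norm (fst (XX \<omega>) - xstar))\<^sup>2"
      unfolding c_def using S by (simp add: mult_left_mono)
    have b: "c * (norm (fst (XX \<omega>) - xstar))\<^sup>2 \<le> c * (2 * (norm (fst (XX \<omega>)))\<^sup>2 + 2 * (norm xstar)\<^sup>2)"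
      using c0 norm_diff_sq_le by (rule mult_left_mono[rotated])
    have "0 \<le> Wf 0 (hist 0 \<omega>)" by (rule Wf0)
    moreover have "Wf 0 (hist 0 \<omega>) \<le> ?f \<omega>"
      unfolding Wf0_hist using a b norm_diff_sq_le[of "snd (XX \<omega>)" xstar] by linarith
    ultimately show "norm (Wf 0 (hist 0 \<omega>)) \<le> norm (?f \<omega>)" by simp
  qed
qed

lemma AE_Wf_conv: "AE \<omega> in M. convergent (\<lambda>m. Wf m (hist m \<omega>))"
  by (rule usm_conv[OF Wf_meas Wf0 Wf_sup int0]) simp

end

context saga_alg begin

lemma Pf_bound: "Pf m \<le> exp (suminf af)"
proof -
  have "Pf m \<le> (\<Prod>j<m. exp (af j))"
    unfolding Pf_def using af0 by (intro prod_mono) (auto simp: add_nonneg_nonneg)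
  also have "\<dots> = exp (\<Sum>j<m. af j)" by (simp add: exp_sum)
  also have "\<dots> \<le> exp (suminf af)" using sum_le_suminf[OF af_summ, of "{..<m}"] af0 by auto
  finally show ?thesis .
qed

lemma Pf_mono: "Pf m \<le> Pf (Suc m)"
  using Pf_pos[of m] af0[of m] by (simp add: Pf_Suc algebra_simps)

lemma Tt_lim: "Tt \<longlonglongrightarrow> 0"
proof -
  have "(\<lambda>m. suminf tb - (\<Sum>j<m. tb j)) \<longlonglongrightarrow> suminf tb - suminf tb"
    by (intro tendsto_diff tendsto_const summable_LIMSEQ tb_summ)
  then show ?thesis by (simp add: Tt_def[abs_def])
qed

lemma path_conv:
  assumes Ur: "\<forall>n\<ge>2. U n \<omega> \<in> {1..N}" and cW: "convergent (\<lambda>m. Wf m (hist m \<omega>))"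
  shows "(\<lambda>m. fst (stm m (hist m \<omega>))) \<longlonglongrightarrow> xstar"
proof -
  define H where "H m = hist m \<omega>" for m
  define xs where "xs m = fst (stm m (H m))" for m
  define gs where "gs m = snd (stm m (H m))" for m
  define z where "z = XX \<omega>"
  define Pmax where "Pmax = exp (suminf af)"
  have lenH: "length (snd (H m)) = m" for m by (simp add: H_def)
  have H_eq: "H m = (z, snd (H m))" for m by (simp add: H_def hist_def z_def)
  have Hs: "H (Suc m) = (z, snd (H m) @ [U (m+2) \<omega>])" for m by (simp add: H_def hist_def z_def)
  have Uk: "U (m+2) \<omega> \<in> {1..N}" for m using Ur by simp
  have gs0: "gs 0 = (\<lambda>k. G k (fst z))" unfolding gs_def H_def by (simp add: stm_0 hist_def z_def)
  have gsS: "gs (Suc m) = (gs m)(U (m+2) \<omega> := G (U (m+2) \<omega>) (xs m))" for m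
  proof -
    have "stm (Suc m) (H (Suc m)) = stm (Suc m) (z, snd (H m) @ [U (m+2) \<omega>])" by (simp add: Hs)
    also have "\<dots> = (fst (stm m (z, snd (H m))) - gam (Suc m) *\<^sub>R (G (U (m+2) \<omega>) (fst (stm m (z, snd (H m)))) - lam *\<^sub>R (snd (stm m (z, snd (H m))) (U (m+2) \<omega>) - avg_fun N (\<lambda>j _. snd (stm m (z, snd (H m))) j) (fst (stm m (z, snd (H m)))))),
      (snd (stm m (z, snd (H m))))(U (m+2) \<omega> := G (U (m+2) \<omega>) (fst (stm m (z, snd (H m))))))"
      by (rule stm_ext[OF lenH Uk])
    finally show ?thesis unfolding gs_def xs_def using H_eq[of m] by simp
  qed
  have Pb: "Pf m \<le> Pmax" for m unfolding Pmax_def by (rule Pf_bound)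
  have Pmax1: "1 \<le> Pmax" using Pf1[of 0] Pb[of 0] by simp
  have cP: "convergent Pf"
  proof (rule Bseq_monoseq_convergent)
    show "Bseq Pf" using Pb Pf1 by (intro BseqI'[where K=Pmax]) (simp add: abs_of_nonneg order.trans[OF zero_le_one])
    show "monoseq Pf" by (rule mono_SucI1) (simp add: Pf_mono)
  qed
  define W where "W m = Wf m (H m)" for m
  obtain KW where KW: "\<And>m. \<bar>W m\<bar> \<le> KW"
    using convergent_imp_Bseq[OF cW] unfolding Bseq_def W_def H_def by auto
  define A where "A m = Cacc m (H m)" for m
  have A_eq: "A m = (\<Sum>j<m. cf j (H j) / Pf (Suc j))" for m
    unfolding A_def Cacc_def H_def by (intro sum.cong refl) (simp add: trunc_hist)
  have VP0: "0 \<le> Vf m (H m) / Pf m" for m using Vf0 Pf_pos by (simp add: divide_nonneg_pos)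
  have WA: "W m = Vf m (H m) / Pf m + A m + Tt m" for m unfolding W_def A_def Wf_def ..
  have A_le: "A m \<le> KW" for m using WA[of m] VP0[of m] Tt0[of m] KW[of m] by linarith
  have sA: "summable (\<lambda>j. cf j (H j) / Pf (Suc j))"
  proof (rule summableI_nonneg_bounded)
    show "0 \<le> cf n (H n) / Pf (Suc n)" for n using cf0 Pf_pos by (simp add: divide_nonneg_pos)
    show "(\<Sum>j<n. cf j (H j) / Pf (Suc j)) \<le> KW" for n using A_le[of n] A_eq[of n] by simp
  qed
  have cA: "convergent A" using sA unfolding A_eq[abs_def] by (simp add: summable_iff_convergent)
  have cVP: "convergent (\<lambda>m. Vf m (H m) / Pf m)"
  proof -
    have "convergent (\<lambda>m. W m - A m - Tt m)"
      using cW cA Tt_lim unfolding W_def H_def by (intro convergent_diff) (auto simp: convergent_def)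
    moreover have "(\<lambda>m. W m - A m - Tt m) = (\<lambda>m. Vf m (H m) / Pf m)" using WA by (auto simp: fun_eq_iff)
    ultimately show ?thesis by simp
  qed
  have cV: "convergent (\<lambda>m. Vf m (H m))"
  proof -
    have "convergent (\<lambda>m. Pf m * (Vf m (H m) / Pf m))" using cP cVP by (rule convergent_mult)
    moreover have "(\<lambda>m. Pf m * (Vf m (H m) / Pf m)) = (\<lambda>m. Vf m (H m))" using Pf_pos by (auto simp: fun_eq_iff) (metis less_irrefl)
    ultimately show ?thesis by simp
  qed
  obtain KV where KV: "\<And>m. \<bar>Vf m (H m)\<bar> \<le> KV"
    using convergent_imp_Bseq[OF cV] unfolding Bseq_def by auto
  have xsV: "(norm (xs m - xstar))\<^sup>2 \<le> KV" for m
  proof -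
    have "(norm (xs m - xstar))\<^sup>2 \<le> Vf m (H m)" unfolding Vf_def xs_def using Sgf_nonneg[of N G xstar] by simp
    then show ?thesis using KV[of m] by simp
  qed
  have scf: "summable (\<lambda>j. cf j (H j))"
  proof (rule summable_comparison_test'[where g="\<lambda>j. Pmax * (cf j (H j) / Pf (Suc j))"])
    show "summable (\<lambda>j. Pmax * (cf j (H j) / Pf (Suc j)))" using sA by (rule summable_mult)
    fix n
    have "cf n (H n) = Pf (Suc n) * (cf n (H n) / Pf (Suc n))" using Pf_pos[of "Suc n"] by simp
    also have "\<dots> \<le> Pmax * (cf n (H n) / Pf (Suc n))"
      using Pb[of "Suc n"] cf0[of n] Pf_pos[of "Suc n"] by (intro mult_right_mono) (auto simp: divide_nonneg_pos)
    finally show "norm (cf n (H n)) \<le> Pmax * (cf n (H n) / Pf (Suc n))" using cf0 by simp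
  qed
  define R where "R = max ((norm (fst z - xstar))\<^sup>2) KV"
  have gsb: "\<forall>k\<in>{1..N}. (norm (gs m k - G k xstar))\<^sup>2 \<le> real N * L * R" for m
  proof (induction m)
    case 0
    show ?case unfolding gs0
    proof
      fix k assume k: "k \<in> {1..N}"
      have "(norm (G k (fst z) - G k xstar))\<^sup>2 \<le> real N * L * (norm (fst z - xstar))\<^sup>2" by (rule G_term[OF k])
      also have "\<dots> \<le> real N * L * R" unfolding R_def using L by (intro mult_left_mono) auto
      finally show "(norm (G k (fst z) - G k xstar))\<^sup>2 \<le> real N * L * R" .
    qed
  next
    case (Suc m)
    show ?case unfolding gsS
    proof
      fix k assume k: "k \<in> {1..N}"
      show "(norm (((gs m)(U (m+2) \<omega> := G (U (m+2) \<omega>) (xs m))) k - G k xstar))\<^sup>2 \<le> real N * L * R"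
      proof (cases "k = U (m+2) \<omega>")
        case True
        have "(norm (G k (xs m) - G k xstar))\<^sup>2 \<le> real N * L * (norm (xs m - xstar))\<^sup>2" by (rule G_term[OF k])
        also have "\<dots> \<le> real N * L * R" unfolding R_def using L xsV[of m] by (intro mult_left_mono) auto
        finally show ?thesis using True by simp
      next
        case False then show ?thesis using Suc k by simp
      qed
    qed
  qed
  have Sgb: "Sgf N G xstar (gs m) \<le> real N * L * R" for m
  proof -
    have "(\<Sum>k=1..N. (norm (gs m k - G k xstar))\<^sup>2) \<le> (\<Sum>k=1..N. real N * L * R)"
      using gsb[of m] by (intro sum_mono) auto
    then show ?thesis unfolding Sgf_def using N by (simp add: divide_le_eq mult.commute)
  qed
  have gam1: "(\<lambda>m. gam (Suc m)) \<longlonglongrightarrow> 0" using gam_lim by (rule LIMSEQ_Suc)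
  have term0: "(\<lambda>m. 3 * real N * (gam (Suc m))\<^sup>2 * Sgf N G xstar (gs m)) \<longlonglongrightarrow> 0"
  proof (rule real_tendsto_sandwich[where f="\<lambda>_. 0" and h="\<lambda>m. 3 * real N * (gam (Suc m))\<^sup>2 * (real N * L * R)"])
    show "\<forall>\<^sub>F m in sequentially. 0 \<le> 3 * real N * (gam (Suc m))\<^sup>2 * Sgf N G xstar (gs m)"
      by (intro always_eventually allI mult_nonneg_nonneg Sgf_nonneg) auto
    show "\<forall>\<^sub>F m in sequentially. 3 * real N * (gam (Suc m))\<^sup>2 * Sgf N G xstar (gs m) \<le> 3 * real N * (gam (Suc m))\<^sup>2 * (real N * L * R)"
      by (intro always_eventually allI mult_left_mono Sgb) auto
    show "(\<lambda>_. 0) \<longlonglongrightarrow> (0::real)" by simp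
    have "(\<lambda>m. 3 * real N * (gam (Suc m))\<^sup>2 * (real N * L * R)) \<longlonglongrightarrow> 3 * real N * 0\<^sup>2 * (real N * L * R)"
      by (intro tendsto_intros gam1)
    then show "(\<lambda>m. 3 * real N * (gam (Suc m))\<^sup>2 * (real N * L * R)) \<longlonglongrightarrow> 0" by simp
  qed
  define lv where "lv = lim (\<lambda>m. Vf m (H m))"
  have Vl: "(\<lambda>m. Vf m (H m)) \<longlonglongrightarrow> lv" using cV unfolding lv_def by (simp add: convergent_LIMSEQ_iff)
  have E_eq: "(norm (xs m - xstar))\<^sup>2 = Vf m (H m) - 3 * real N * (gam (Suc m))\<^sup>2 * Sgf N G xstar (gs m)" for m
    unfolding Vf_def xs_def gs_def by simp
  have El: "(\<lambda>m. (norm (xs m - xstar))\<^sup>2) \<longlonglongrightarrow> lv"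
    unfolding E_eq using tendsto_diff[OF Vl term0] by simp
  have l0: "0 \<le> lv" by (rule LIMSEQ_le_const[OF El]) auto
  have "lv = 0"
  proof (rule ccontr)
    assume "lv \<noteq> 0"
    then have lp: "0 < lv" using l0 by simp
    define K where "K = {y. lv / 2 \<le> (norm (y - xstar))\<^sup>2 \<and> (norm (y - xstar))\<^sup>2 \<le> 2 * lv}"
    have evK: "eventually (\<lambda>m. xs m \<in> K) sequentially"
    proof -
      have "eventually (\<lambda>m. lv / 2 < (norm (xs m - xstar))\<^sup>2) sequentially"
        using order_tendstoD(1)[OF El, of "lv / 2"] lp by simp
      moreover have "eventually (\<lambda>m. (norm (xs m - xstar))\<^sup>2 < 2 * lv) sequentially"
        using order_tendstoD(2)[OF El, of "2 * lv"] lp by simp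
      ultimately show ?thesis unfolding K_def by eventually_elim auto
    qed
    have Kne: "K \<noteq> {}" using evK by (metis eventually_sequentially empty_iff le_refl)
    have Kc: "compact K"
    proof (subst compact_eq_bounded_closed, rule conjI)
      have "K \<subseteq> cball xstar (sqrt (2 * lv))"
      proof
        fix y assume "y \<in> K"
        then have "(norm (y - xstar))\<^sup>2 \<le> 2 * lv" unfolding K_def by simp
        then have "norm (y - xstar) \<le> sqrt (2 * lv)" using real_le_rsqrt by blast
        then show "y \<in> cball xstar (sqrt (2 * lv))" by (simp add: dist_norm norm_minus_commute)
      qed
      then show "bounded K" using bounded_cball bounded_subset by blast
      show "closed K" unfolding K_def
        by (intro closed_Collect_conj closed_Collect_le continuous_intros)
    qed
    have fc: "continuous_on K (\<lambda>y. (y - xstar) \<bullet> hf y)"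
      using h_cont unfolding hf_def by (intro continuous_intros) (auto intro: continuous_on_subset)
    obtain y0 where y0: "y0 \<in> K" and ymin: "\<And>y. y \<in> K \<Longrightarrow> (y0 - xstar) \<bullet> hf y0 \<le> (y - xstar) \<bullet> hf y"
      using continuous_attains_inf[OF Kc Kne fc] by blast
    define \<delta> where "\<delta> = (y0 - xstar) \<bullet> hf y0"
    have "y0 \<noteq> xstar" using y0 lp unfolding K_def by auto
    then have dp: "0 < \<delta>" unfolding \<delta>_def hf_def by (rule A2)
    have ev: "eventually (\<lambda>m. norm (gam (Suc m)) \<le> cf m (H m) / (2 * \<delta>)) sequentially"
      using evK
    proof eventually_elim
      case (elim m)
      have gp: "0 < gam (Suc m)" by (rule gam_pos) simp
      have "\<delta> \<le> (xs m - xstar) \<bullet> hf (xs m)" using ymin[OF elim] unfolding \<delta>_def .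
      then have "2 * gam (Suc m) * \<delta> \<le> cf m (H m)"
        unfolding cf_def xs_def using gp by (simp add: mult_left_mono)
      then show ?case using gp dp by (simp add: field_simps)
    qed
    have "summable (\<lambda>m. gam (Suc m))"
      by (rule summable_comparison_test_ev[OF ev]) (intro summable_divide scf)
    then have "summable gam" by (simp add: summable_Suc_iff)
    then show False using gam_sum by simp
  qed
  then have "(\<lambda>m. sqrt ((norm (xs m - xstar))\<^sup>2)) \<longlonglongrightarrow> sqrt 0" using El by (intro tendsto_real_sqrt) simp
  then have "(\<lambda>m. norm (xs m - xstar)) \<longlonglongrightarrow> 0" by simp
  then have "(\<lambda>m. xs m - xstar) \<longlonglongrightarrow> 0" by (simp add: tendsto_norm_zero_iff)
  then show ?thesis unfolding xs_def H_def by (simp add: LIM_zero_iff)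
qed

end

lemma deriv_meas:
  fixes F :: "'v::euclidean_space \<Rightarrow> real" and G :: "'v \<Rightarrow> 'v"
  assumes d: "\<And>x. (F has_derivative (\<lambda>h. G x \<bullet> h)) (at x)"
  shows "G \<in> borel_measurable borel"
proof -
  have Fc: "continuous_on UNIV F"
    using d has_derivative_continuous by (blast intro: continuous_at_imp_continuous_on)
  have Fm[measurable]: "F \<in> borel_measurable borel" by (rule borel_measurable_continuous_onI[OF Fc])
  have comp[measurable]: "(\<lambda>x. G x \<bullet> b) \<in> borel_measurable borel" for b
  proof (rule borel_measurable_LIMSEQ_metric[where f="\<lambda>n x. (F (x + inverse (real (Suc n)) *\<^sub>R b) - F x) / inverse (real (Suc n))"])
    show "(\<lambda>x. (F (x + inverse (real (Suc n)) *\<^sub>R b) - F x) / inverse (real (Suc n))) \<in> borel_measurable borel" for n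
      by measurable
    fix x :: 'v
    have l1: "((\<lambda>t::real. x + t *\<^sub>R b) has_derivative (\<lambda>t. t *\<^sub>R b)) (at 0)"
      by (auto intro!: derivative_eq_intros)
    have "((\<lambda>t. F (x + t *\<^sub>R b)) has_derivative (\<lambda>t. G x \<bullet> (t *\<^sub>R b))) (at 0)"
      using has_derivative_compose[OF l1, of F "\<lambda>h. G x \<bullet> h"] d[of x] by simp
    moreover have "(\<lambda>t. G x \<bullet> (t *\<^sub>R b)) = (*) (G x \<bullet> b)" by (auto simp: fun_eq_iff)
    ultimately have "((\<lambda>t. F (x + t *\<^sub>R b)) has_field_derivative (G x \<bullet> b)) (at 0)"
      by (simp add: has_field_derivative_def)
    then have lim: "((\<lambda>t. (F (x + t *\<^sub>R b) - F x) / t) \<longlongrightarrow> G x \<bullet> b) (at 0)"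
      using has_field_derivative_iff[THEN iffD1] by fastforce
    have fl: "filterlim (\<lambda>n. inverse (real (Suc n))) (at 0) sequentially"
      by (intro filterlim_atI LIMSEQ_inverse_real_of_nat) auto
    show "(\<lambda>n. (F (x + inverse (real (Suc n)) *\<^sub>R b) - F x) / inverse (real (Suc n))) \<longlonglongrightarrow> G x \<bullet> b"
      using filterlim_compose[OF lim fl] by simp
  qed
  have eq: "G = (\<lambda>x. \<Sum>b\<in>Basis. (G x \<bullet> b) *\<^sub>R b)" by (simp add: euclidean_representation)
  show ?thesis by (subst eq) measurable
qed

theorem theorem1:
  fixes M :: "'a measure"
    and N :: nat
    and F :: "nat \<Rightarrow> 'v::euclidean_space \<Rightarrow> real"
    and G :: "nat \<Rightarrow> 'v \<Rightarrow> 'v"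
    and lam :: real
    and gam :: "nat \<Rightarrow> real"
    and X0 X1 :: "'a \<Rightarrow> 'v"
    and U :: "nat \<Rightarrow> 'a \<Rightarrow> nat"
    and xstar :: 'v
    and L :: real
  assumes M: "prob_space M"
    and N: "N \<ge> 1"
    and grad: "\<And>k x. k \<in> {1..N} \<Longrightarrow> (F k has_derivative (\<lambda>h. G k x \<bullet> h)) (at x)"
    and lam: "0 \<le> lam" "lam \<le> 1"
    and gam_pos: "\<And>n. n \<ge> 1 \<Longrightarrow> gam n > 0"
    and gam_decr: "\<And>n. n \<ge> 1 \<Longrightarrow> gam (Suc n) \<le> gam n"
    and gam_lim: "gam \<longlonglongrightarrow> 0"
    and gam_sum: "\<not> summable gam"
    and gam_sq: "summable (\<lambda>n. (gam n)\<^sup>2)"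
    and X0: "X0 \<in> borel_measurable M" "integrable M (\<lambda>\<omega>. (norm (X0 \<omega>))\<^sup>2)"
    and X1: "X1 \<in> borel_measurable M" "integrable M (\<lambda>\<omega>. (norm (X1 \<omega>))\<^sup>2)"
    and U_meas: "\<And>n. n \<ge> 2 \<Longrightarrow> U n \<in> measurable M (count_space UNIV)"
    and U_unif: "\<And>n. n \<ge> 2 \<Longrightarrow>
                   distr M (count_space UNIV) (U n) = measure_pmf (pmf_of_set {1..N})"
    and U_indep: "prob_space.indep_vars M (\<lambda>_. count_space UNIV) U {2..}"
    and X_U_indep: "prob_space.indep_set M
                      (sets (vimage_algebra (space M) (\<lambda>\<omega>. (X0 \<omega>, X1 \<omega>)) borel))
                      (sets (vimage_algebra (space M) (\<lambda>\<omega>. restrict (\<lambda>n. U n \<omega>) {2::nat..})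
                                (PiM {2..} (\<lambda>_. count_space UNIV))))"
    and A1_cont: "continuous_on UNIV (avg_fun N G)"
    and A1_crit: "avg_fun N G xstar = 0"
    and A1_uniq: "\<And>x. avg_fun N G x = 0 \<Longrightarrow> x = xstar"
    and A2: "\<And>x. x \<noteq> xstar \<Longrightarrow> (x - xstar) \<bullet> avg_fun N G x > 0"
    and L: "L > 0"
    and A3: "\<And>x. (1 / real N) * (\<Sum>k = 1..N. (norm (G k x - G k xstar))\<^sup>2) \<le> L * (norm (x - xstar))\<^sup>2"
  shows "(AE \<omega> in M. (\<lambda>n. saga_X N G lam gam (X0 \<omega>) (X1 \<omega>) (\<lambda>n. U n \<omega>) n) \<longlonglongrightarrow> xstar)
       \<and> (AE \<omega> in M. (\<lambda>n. avg_fun N F (saga_X N G lam gam (X0 \<omega>) (X1 \<omega>) (\<lambda>n. U n \<omega>) n))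
                        \<longlonglongrightarrow> avg_fun N F xstar)"
proof -
  define XX where "XX = (\<lambda>\<omega>. (X0 \<omega>, X1 \<omega>))"
  have XXm: "XX \<in> borel_measurable M"
    using measurable_Pair[OF X0(1) X1(1)] by (simp add: XX_def borel_prod)
  have Gm: "G k \<in> borel_measurable borel" if "k \<in> {1..N}" for k
    by (rule deriv_meas[OF grad[OF that]])
  have SP: "saga_prob M N XX U"
  proof (intro saga_prob.intro saga_prob_axioms.intro)
    show "prob_space M" by (rule M)
    show "N \<ge> 1" by (rule N)
    show "XX \<in> borel_measurable M" by (rule XXm)
    show "U n \<in> measurable M (count_space UNIV)" if "n \<ge> 2" for n using U_meas that .
    show "distr M (count_space UNIV) (U n) = measure_pmf (pmf_of_set {1..N})" if "n \<ge> 2" for n using U_unif that .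
    show "prob_space.indep_vars M (\<lambda>_. count_space UNIV) U {2..}" by (rule U_indep)
    show "prob_space.indep_set M (sets (vimage_algebra (space M) XX borel))
        (sets (vimage_algebra (space M) (\<lambda>\<omega>. restrict (\<lambda>n. U n \<omega>) {2::nat..}) (PiM {2..} (\<lambda>_. count_space UNIV))))"
      using X_U_indep unfolding XX_def .
  qed
  have SA: "saga_alg M N XX U G lam gam xstar L"
  proof (intro saga_alg.intro SP saga_alg_axioms.intro)
    show "G k \<in> borel_measurable borel" if "k \<in> {1..N}" for k using Gm that .
    show "0 \<le> lam" by (rule lam(1))
    show "lam \<le> 1" by (rule lam(2))
    show "gam n > 0" if "n \<ge> 1" for n using gam_pos that .
    show "gam (Suc n) \<le> gam n" if "n \<ge> 1" for n using gam_decr that .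
    show "gam \<longlonglongrightarrow> 0" by (rule gam_lim)
    show "\<not> summable gam" by (rule gam_sum)
    show "summable (\<lambda>n. (gam n)\<^sup>2)" by (rule gam_sq)
    show "continuous_on UNIV (avg_fun N G)" by (rule A1_cont)
    show "avg_fun N G xstar = 0" by (rule A1_crit)
    show "(x - xstar) \<bullet> avg_fun N G x > 0" if "x \<noteq> xstar" for x using A2 that .
    show "L > 0" by (rule L)
    show "(1 / real N) * (\<Sum>k = 1..N. (norm (G k x - G k xstar))\<^sup>2) \<le> L * (norm (x - xstar))\<^sup>2" for x by (rule A3)
    show "integrable M (\<lambda>\<omega>. (norm (fst (XX \<omega>)))\<^sup>2)" using X0(2) by (simp add: XX_def)
    show "integrable M (\<lambda>\<omega>. (norm (snd (XX \<omega>)))\<^sup>2)" using X1(2) by (simp add: XX_def)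
  qed
  interpret S: saga_alg M N XX U G lam gam xstar L by (rule SA)
  have AE1: "AE \<omega> in M. (\<lambda>n. saga_X N G lam gam (X0 \<omega>) (X1 \<omega>) (\<lambda>n. U n \<omega>) n) \<longlonglongrightarrow> xstar"
    using S.AE_U_range S.AE_Wf_conv
  proof eventually_elim
    case (elim \<omega>)
    have "(\<lambda>m. fst (S.stm m (S.hist m \<omega>))) \<longlonglongrightarrow> xstar" by (rule S.path_conv[OF elim])
    moreover have eq: "saga_X N G lam gam (X0 \<omega>) (X1 \<omega>) (\<lambda>n. U n \<omega>) (Suc m) = fst (S.stm m (S.hist m \<omega>))" for m
    proof -
      have "saga_X N G lam gam (X0 \<omega>) (X1 \<omega>) (\<lambda>n. U n \<omega>) (Suc m) = fst (saga_state N G lam gam (X0 \<omega>) (X1 \<omega>) (\<lambda>n. U n \<omega>) m)"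
        unfolding saga_X_def by simp
      also have "saga_state N G lam gam (X0 \<omega>) (X1 \<omega>) (\<lambda>n. U n \<omega>) m = S.stm m (S.hist m \<omega>)"
        using S.hist_stm[OF elim(1), of m] unfolding XX_def fst_conv snd_conv .
      finally show ?thesis .
    qed
    ultimately have "(\<lambda>m. saga_X N G lam gam (X0 \<omega>) (X1 \<omega>) (\<lambda>n. U n \<omega>) (Suc m)) \<longlonglongrightarrow> xstar"
      by (simp only: eq)
    then show ?case by (rule LIMSEQ_imp_Suc)
  qed
  have cont: "isCont (avg_fun N F) xstar"
  proof -
    have "isCont (F k) xstar" if "k \<in> {1..N}" for k
      using has_derivative_continuous[OF grad[OF that]] .
    then have "isCont (\<lambda>x. (1 / real N) *\<^sub>R (\<Sum>k = 1..N. F k x)) xstar"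
      by (intro continuous_intros) auto
    then show ?thesis by (simp add: avg_fun_def[abs_def])
  qed
  have AE2: "AE \<omega> in M. (\<lambda>n. avg_fun N F (saga_X N G lam gam (X0 \<omega>) (X1 \<omega>) (\<lambda>n. U n \<omega>) n)) \<longlonglongrightarrow> avg_fun N F xstar"
    using AE1 by eventually_elim (rule isCont_tendsto_compose[OF cont])
  show ?thesis using AE1 AE2 by blast
qed


end
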